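(* In the setting below, the asymmetric product $T\rtimes_\circ S$ is a simple left brace if and only if $f_z-\mathrm{id}$ is bijective on $V_z$ for every $z\in\mathbb{Z}/(n)$.
   Context: A left brace is a set $B$ with two operations $+,\cdot$ such that $(B,+)$ is an abelian group, $(B,\cdot)$ is a group and $a(b+c)+a=ab+ac$ for all $a,b,c$; $\lambda_a(b)=ab-a$. A left ideal is a subgroup $L$ of $(B,+)$ with $\lambda_b(L)\subseteq L$ for all $b$; an ideal is a left ideal that is a normal subgroup of $(B,\cdot)$; $B$ is simple if $B\neq0$ and its only ideals are $0$ and $B$. For a symmetric bi-additive map $\beta\colon X\times X\to Y$, $\mathrm{O}(X,\beta)=\{g\in\mathrm{Aut}(X,+):\beta(g(x),g(y))=\beta(x,y)\ \forall x,y\}$. Setting: $n>1$, indices $z$ range over $\mathbb{Z}/(n)$. For each $z$, $p_z$ is a prime ($p_z\ne p_{z'}$ for $z\ne z'$), $r_z$ is a positive integer, $m_z$ is an integer with $m_z\ge\max\{r_z,r_{z-1}\}$, $V_z$ is a finite-dimensional $\mathbb{Z}/(p_z)$-vector space with a non-singular symmetric bilinear form $b_z$, and $f_z\in\mathrm{O}(V_z,b_z)$ has order $p_{z-1}$. Let $T_z=V_z^{m_z}$, $S_z=(\mathbb{Z}/(p_z))^{r_z}$ with standard basis $e^{(z)}_1,\dots,e^{(z)}_{r_z}$. Define $b'_z\colon T_z\times T_z\to S_z$ by $b'_z((u_j),(v_j))=\sum_{i=1}^{r_z-1}b_z(u_i,v_i)e^{(z)}_i+\big(\sum_{j=1}^{m_z}b_z(u_j,v_j)\big)e^{(z)}_{r_z}$.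 With $r=r_{z-1}$ and $s=\sum_{i=1}^r\mu_ie^{(z-1)}_i\in S_{z-1}$, define $f^{(z-1,z)}_s(u_1,\dots,u_{m_z})=(f_z^{\mu_1+\mu_r}(u_1),\dots,f_z^{\mu_{r-1}+\mu_r}(u_{r-1}),f_z^{\mu_r}(u_r),\dots,f_z^{\mu_r}(u_{m_z}))$ (all components $f_z^{\mu_1}(u_j)$ if $r=1$). Let $T=T_1\times\cdots\times T_n$, $S=S_1\times\cdots\times S_n$, $b\colon T\times T\to S$, $b(t,t')=(b'_1(t_1,t'_1),\dots,b'_n(t_n,t'_n))$, and $\alpha_{(s_1,\dots,s_n)}(t_1,\dots,t_n)=(f^{(n,1)}_{s_n}(t_1),f^{(1,2)}_{s_1}(t_2),\dots,f^{(n-1,n)}_{s_{n-1}}(t_n))$. The asymmetric product $T\rtimes_\circ S$ is the set $T\times S$ with $(t,s)+(t',s')=(t+t',s+s'+b(t,t'))$ and $(t,s)\cdot(t',s')=(t+\alpha_s(t'),s+s')$; it is a left brace. *)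

theory Defs
  imports "HOL-Algebra.Coset" "HOL-Computational_Algebra.Primes"
begin

definition add_grp :: "'a set \<Rightarrow> ('a \<Rightarrow> 'a \<Rightarrow> 'a) \<Rightarrow> 'a \<Rightarrow> 'a monoid" where
  "add_grp A pl z0 = \<lparr>carrier = A, monoid.mult = pl, one = z0\<rparr>"

definition mul_grp :: "'a set \<Rightarrow> ('a \<Rightarrow> 'a \<Rightarrow> 'a) \<Rightarrow> 'a \<Rightarrow> 'a monoid" where
  "mul_grp A tm e = \<lparr>carrier = A, monoid.mult = tm, one = e\<rparr>"

definition left_brace :: "'a set \<Rightarrow> ('a \<Rightarrow> 'a \<Rightarrow> 'a) \<Rightarrow> 'a \<Rightarrow> ('a \<Rightarrow> 'a \<Rightarrow> 'a) \<Rightarrow> bool" where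
  "left_brace A pl z0 tm \<longleftrightarrow>
     comm_group (add_grp A pl z0) \<and>
     (\<exists>e. group (mul_grp A tm e)) \<and>
     (\<forall>a\<in>A. \<forall>b\<in>A. \<forall>c\<in>A. pl (tm a (pl b c)) a = pl (tm a b) (tm a c))"

definition brace_lambda :: "'a set \<Rightarrow> ('a \<Rightarrow> 'a \<Rightarrow> 'a) \<Rightarrow> 'a \<Rightarrow> ('a \<Rightarrow> 'a \<Rightarrow> 'a) \<Rightarrow> 'a \<Rightarrow> 'a \<Rightarrow> 'a" where
  "brace_lambda A pl z0 tm a b = pl (tm a b) (inv\<^bsub>add_grp A pl z0\<^esub> a)"

definition brace_left_ideal :: "'a set \<Rightarrow> ('a \<Rightarrow> 'a \<Rightarrow> 'a) \<Rightarrow> 'a \<Rightarrow> ('a \<Rightarrow> 'a \<Rightarrow> 'a) \<Rightarrow> 'a set \<Rightarrow> bool" where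
  "brace_left_ideal A pl z0 tm L \<longleftrightarrow>
     subgroup L (add_grp A pl z0) \<and>
     (\<forall>b\<in>A. \<forall>x\<in>L. brace_lambda A pl z0 tm b x \<in> L)"

definition brace_ideal :: "'a set \<Rightarrow> ('a \<Rightarrow> 'a \<Rightarrow> 'a) \<Rightarrow> 'a \<Rightarrow> ('a \<Rightarrow> 'a \<Rightarrow> 'a) \<Rightarrow> 'a set \<Rightarrow> bool" where
  "brace_ideal A pl z0 tm I \<longleftrightarrow>
     brace_left_ideal A pl z0 tm I \<and>
     (\<exists>e. group (mul_grp A tm e) \<and> I \<lhd> mul_grp A tm e)"

definition simple_left_brace :: "'a set \<Rightarrow> ('a \<Rightarrow> 'a \<Rightarrow> 'a) \<Rightarrow> 'a \<Rightarrow> ('a \<Rightarrow> 'a \<Rightarrow> 'a) \<Rightarrow> bool" where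
  "simple_left_brace A pl z0 tm \<longleftrightarrow>
     left_brace A pl z0 tm \<and> A \<noteq> {z0} \<and>
     (\<forall>I. brace_ideal A pl z0 tm I \<longrightarrow> I = {z0} \<or> I = A)"

text \<open>Cyclic predecessor on Z/(n), represented by {0..<n}.\<close>
definition cpred :: "nat \<Rightarrow> nat \<Rightarrow> nat" where
  "cpred n z = (z + n - 1) mod n"

text \<open>(Z/(p))^d, vectors as functions nat => int with entries in {0..<p} and support in {0..<d}.\<close>
definition Zp_space :: "nat \<Rightarrow> nat \<Rightarrow> (nat \<Rightarrow> int) set" where
  "Zp_space p d = {v. (\<forall>i<d. 0 \<le> v i \<and> v i < int p) \<and> (\<forall>i\<ge>d. v i = 0)}"

definition vadd :: "nat \<Rightarrow> (nat \<Rightarrow> int) \<Rightarrow> (nat \<Rightarrow> int) \<Rightarrow> (nat \<Rightarrow> int)" where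
  "vadd p u v = (\<lambda>i. (u i + v i) mod int p)"

definition vsub :: "nat \<Rightarrow> (nat \<Rightarrow> int) \<Rightarrow> (nat \<Rightarrow> int) \<Rightarrow> (nat \<Rightarrow> int)" where
  "vsub p u v = (\<lambda>i. (u i - v i) mod int p)"

text \<open>Non-singular symmetric bilinear form V x V -> Z/(p) (values in {0..<p}).
  Bi-additivity is bilinearity over Z/(p).\<close>
definition nonsing_sym_bilinear :: "nat \<Rightarrow> (nat \<Rightarrow> int) set \<Rightarrow> ((nat \<Rightarrow> int) \<Rightarrow> (nat \<Rightarrow> int) \<Rightarrow> int) \<Rightarrow> bool" where
  "nonsing_sym_bilinear p V b \<longleftrightarrow>
     (\<forall>u\<in>V. \<forall>v\<in>V. 0 \<le> b u v \<and> b u v < int p) \<and>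
     (\<forall>u\<in>V. \<forall>v\<in>V. b u v = b v u) \<and>
     (\<forall>u\<in>V. \<forall>v\<in>V. \<forall>w\<in>V. b (vadd p u v) w = (b u w + b v w) mod int p) \<and>
     (\<forall>u\<in>V. (\<forall>v\<in>V. b u v = 0) \<longrightarrow> u = (\<lambda>_. 0))"

definition in_orth :: "nat \<Rightarrow> (nat \<Rightarrow> int) set \<Rightarrow> ((nat \<Rightarrow> int) \<Rightarrow> (nat \<Rightarrow> int) \<Rightarrow> int)
    \<Rightarrow> ((nat \<Rightarrow> int) \<Rightarrow> (nat \<Rightarrow> int)) \<Rightarrow> bool" where
  "in_orth p V b f \<longleftrightarrow>
     bij_betw f V V \<and>
     (\<forall>u\<in>V. \<forall>v\<in>V. f (vadd p u v) = vadd p (f u) (f v)) \<and>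
     (\<forall>u\<in>V. \<forall>v\<in>V. b (f u) (f v) = b u v)"

definition perm_order :: "'v set \<Rightarrow> ('v \<Rightarrow> 'v) \<Rightarrow> nat \<Rightarrow> bool" where
  "perm_order V f k \<longleftrightarrow>
     0 < k \<and> (\<forall>v\<in>V. (f ^^ k) v = v) \<and> (\<forall>j. 0 < j \<and> j < k \<longrightarrow> (\<exists>v\<in>V. (f ^^ j) v \<noteq> v))"

text \<open>T_z = V_z^m (components indexed 0..<m, i.e. paper index j+1).\<close>
definition Tz :: "nat \<Rightarrow> nat \<Rightarrow> nat \<Rightarrow> (nat \<Rightarrow> nat \<Rightarrow> int) set" where
  "Tz p d m = {t. (\<forall>j<m. t j \<in> Zp_space p d) \<and> (\<forall>j\<ge>m. t j = (\<lambda>_. 0))}"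

text \<open>b'_z; component i (0-based) corresponds to e_(i+1).\<close>
definition bprime :: "nat \<Rightarrow> nat \<Rightarrow> nat \<Rightarrow> ((nat \<Rightarrow> int) \<Rightarrow> (nat \<Rightarrow> int) \<Rightarrow> int)
    \<Rightarrow> (nat \<Rightarrow> nat \<Rightarrow> int) \<Rightarrow> (nat \<Rightarrow> nat \<Rightarrow> int) \<Rightarrow> (nat \<Rightarrow> int)" where
  "bprime p r m bz u v = (\<lambda>i.
     if i + 1 < r then bz (u i) (v i)
     else if i + 1 = r then (\<Sum>j<m. bz (u j) (v j)) mod int p
     else 0)"

text \<open>f^(z-1,z)_s with r = r_(z-1); s i (0-based) is mu_(i+1).\<close>
definition fshift :: "nat \<Rightarrow> nat \<Rightarrow> ((nat \<Rightarrow> int) \<Rightarrow> (nat \<Rightarrow> int)) \<Rightarrow> (nat \<Rightarrow> int)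
    \<Rightarrow> (nat \<Rightarrow> nat \<Rightarrow> int) \<Rightarrow> (nat \<Rightarrow> nat \<Rightarrow> int)" where
  "fshift r m fz s u = (\<lambda>j.
     if j < m then
       (if j + 1 < r then (fz ^^ nat (s j + s (r - 1))) (u j)
        else (fz ^^ nat (s (r - 1))) (u j))
     else (\<lambda>_. 0))"

definition TT :: "nat \<Rightarrow> (nat \<Rightarrow> nat) \<Rightarrow> (nat \<Rightarrow> nat) \<Rightarrow> (nat \<Rightarrow> nat) \<Rightarrow> (nat \<Rightarrow> nat \<Rightarrow> nat \<Rightarrow> int) set" where
  "TT n p d m = {t. (\<forall>z<n. t z \<in> Tz (p z) (d z) (m z)) \<and> (\<forall>z\<ge>n. t z = (\<lambda>_ _. 0))}"

definition SS :: "nat \<Rightarrow> (nat \<Rightarrow> nat) \<Rightarrow> (nat \<Rightarrow> nat) \<Rightarrow> (nat \<Rightarrow> nat \<Rightarrow> int) set" where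
  "SS n p r = {s. (\<forall>z<n. s z \<in> Zp_space (p z) (r z)) \<and> (\<forall>z\<ge>n. s z = (\<lambda>_. 0))}"

definition tadd :: "nat \<Rightarrow> (nat \<Rightarrow> nat) \<Rightarrow> (nat \<Rightarrow> nat \<Rightarrow> nat \<Rightarrow> int) \<Rightarrow> (nat \<Rightarrow> nat \<Rightarrow> nat \<Rightarrow> int) \<Rightarrow> (nat \<Rightarrow> nat \<Rightarrow> nat \<Rightarrow> int)" where
  "tadd n p t t' = (\<lambda>z j i. if z < n then (t z j i + t' z j i) mod int (p z) else 0)"

definition sadd :: "nat \<Rightarrow> (nat \<Rightarrow> nat) \<Rightarrow> (nat \<Rightarrow> nat \<Rightarrow> int) \<Rightarrow> (nat \<Rightarrow> nat \<Rightarrow> int) \<Rightarrow> (nat \<Rightarrow> nat \<Rightarrow> int)" where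
  "sadd n p s s' = (\<lambda>z i. if z < n then (s z i + s' z i) mod int (p z) else 0)"

definition bT :: "nat \<Rightarrow> (nat \<Rightarrow> nat) \<Rightarrow> (nat \<Rightarrow> nat) \<Rightarrow> (nat \<Rightarrow> nat)
    \<Rightarrow> (nat \<Rightarrow> (nat \<Rightarrow> int) \<Rightarrow> (nat \<Rightarrow> int) \<Rightarrow> int)
    \<Rightarrow> (nat \<Rightarrow> nat \<Rightarrow> nat \<Rightarrow> int) \<Rightarrow> (nat \<Rightarrow> nat \<Rightarrow> nat \<Rightarrow> int) \<Rightarrow> (nat \<Rightarrow> nat \<Rightarrow> int)" where
  "bT n p r m b t t' = (\<lambda>z. if z < n then bprime (p z) (r z) (m z) (b z) (t z) (t' z) else (\<lambda>_. 0))"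

definition alpha :: "nat \<Rightarrow> (nat \<Rightarrow> nat) \<Rightarrow> (nat \<Rightarrow> nat)
    \<Rightarrow> (nat \<Rightarrow> (nat \<Rightarrow> int) \<Rightarrow> (nat \<Rightarrow> int))
    \<Rightarrow> (nat \<Rightarrow> nat \<Rightarrow> int) \<Rightarrow> (nat \<Rightarrow> nat \<Rightarrow> nat \<Rightarrow> int) \<Rightarrow> (nat \<Rightarrow> nat \<Rightarrow> nat \<Rightarrow> int)" where
  "alpha n r m f s t = (\<lambda>z. if z < n then fshift (r (cpred n z)) (m z) (f z) (s (cpred n z)) (t z)
                           else (\<lambda>_ _. 0))"

type_synonym asym_elem = "(nat \<Rightarrow> nat \<Rightarrow> nat \<Rightarrow> int) \<times> (nat \<Rightarrow> nat \<Rightarrow> int)"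

definition asym_carrier :: "nat \<Rightarrow> (nat \<Rightarrow> nat) \<Rightarrow> (nat \<Rightarrow> nat) \<Rightarrow> (nat \<Rightarrow> nat) \<Rightarrow> (nat \<Rightarrow> nat) \<Rightarrow> asym_elem set" where
  "asym_carrier n p d m r = TT n p d m \<times> SS n p r"

definition asym_zero :: asym_elem where
  "asym_zero = ((\<lambda>_ _ _. 0), (\<lambda>_ _. 0))"

definition asym_add :: "nat \<Rightarrow> (nat \<Rightarrow> nat) \<Rightarrow> (nat \<Rightarrow> nat) \<Rightarrow> (nat \<Rightarrow> nat)
    \<Rightarrow> (nat \<Rightarrow> (nat \<Rightarrow> int) \<Rightarrow> (nat \<Rightarrow> int) \<Rightarrow> int) \<Rightarrow> asym_elem \<Rightarrow> asym_elem \<Rightarrow> asym_elem" where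
  "asym_add n p r m b x y =
     (tadd n p (fst x) (fst y), sadd n p (sadd n p (snd x) (snd y)) (bT n p r m b (fst x) (fst y)))"

definition asym_mul :: "nat \<Rightarrow> (nat \<Rightarrow> nat) \<Rightarrow> (nat \<Rightarrow> nat) \<Rightarrow> (nat \<Rightarrow> nat)
    \<Rightarrow> (nat \<Rightarrow> (nat \<Rightarrow> int) \<Rightarrow> (nat \<Rightarrow> int)) \<Rightarrow> asym_elem \<Rightarrow> asym_elem \<Rightarrow> asym_elem" where
  "asym_mul n p r m f x y =
     (tadd n p (fst x) (alpha n r m f (snd x) (fst y)), sadd n p (snd x) (snd y))"

end

theory Submission
  imports Defs
begin

lemma Zp_mem:
  assumes "0 < p"
  shows "v \<in> Zp_space p d \<longleftrightarrow> (\<forall>i. v i mod int p = v i) \<and> (\<forall>i\<ge>d. v i = 0)"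
proof
  assume h: "v \<in> Zp_space p d"
  show "(\<forall>i. v i mod int p = v i) \<and> (\<forall>i\<ge>d. v i = 0)"
  proof (intro conjI allI impI)
    fix i show "v i mod int p = v i"
      using h assms by (cases "i < d") (auto simp: Zp_space_def)
  qed (use h in \<open>auto simp: Zp_space_def\<close>)
next
  assume h: "(\<forall>i. v i mod int p = v i) \<and> (\<forall>i\<ge>d. v i = 0)"
  have "0 \<le> v i \<and> v i < int p" for i
    using h assms by (metis Euclidean_Rings.pos_mod_bound Euclidean_Rings.pos_mod_sign of_nat_0_less_iff)
  then show "v \<in> Zp_space p d" using h by (auto simp: Zp_space_def)
qed

lemma Zp_modI: "0 < p \<Longrightarrow> v \<in> Zp_space p d \<Longrightarrow> v i mod int p = v i"
  using Zp_mem by blast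

lemma Zp_out: "v \<in> Zp_space p d \<Longrightarrow> d \<le> i \<Longrightarrow> v i = 0"
  by (auto simp: Zp_space_def)

lemma Zp_zero: "0 < p \<Longrightarrow> (\<lambda>_. 0) \<in> Zp_space p d"
  by (auto simp: Zp_space_def)

lemma vadd_in: "0 < p \<Longrightarrow> u \<in> Zp_space p d \<Longrightarrow> v \<in> Zp_space p d \<Longrightarrow> vadd p u v \<in> Zp_space p d"
  by (auto simp: Zp_mem vadd_def Zp_out)

lemma vsub_in: "0 < p \<Longrightarrow> u \<in> Zp_space p d \<Longrightarrow> v \<in> Zp_space p d \<Longrightarrow> vsub p u v \<in> Zp_space p d"
  by (auto simp: Zp_mem vsub_def Zp_out)

lemma vadd_vsub: "0 < p \<Longrightarrow> u \<in> Zp_space p d \<Longrightarrow> w \<in> Zp_space p d \<Longrightarrow> vadd p (vsub p w u) u = w"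
  by (rule ext) (simp add: vadd_def vsub_def mod_simps Zp_modI)

lemma vsub_vadd: "0 < p \<Longrightarrow> u \<in> Zp_space p d \<Longrightarrow> w \<in> Zp_space p d \<Longrightarrow> vsub p (vadd p w u) u = w"
  by (rule ext) (simp add: vadd_def vsub_def mod_simps Zp_modI)

lemma vadd_eq_iff:
  assumes "0 < p" "x \<in> Zp_space p d" "u \<in> Zp_space p d" "w \<in> Zp_space p d"
  shows "vadd p x u = w \<longleftrightarrow> x = vsub p w u"
  using assms vadd_vsub vsub_vadd by metis

lemma vsub_self: "vsub p u u = (\<lambda>_. 0)"
  by (simp add: vsub_def)

lemma vadd_zero_right: "0 < p \<Longrightarrow> u \<in> Zp_space p d \<Longrightarrow> vadd p u (\<lambda>_. 0) = u"
  by (rule ext) (simp add: vadd_def Zp_modI)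

lemma vadd_zero_left: "0 < p \<Longrightarrow> u \<in> Zp_space p d \<Longrightarrow> vadd p (\<lambda>_. 0) u = u"
  by (rule ext) (simp add: vadd_def Zp_modI)

lemma vsub_zero_right: "0 < p \<Longrightarrow> u \<in> Zp_space p d \<Longrightarrow> vsub p u (\<lambda>_. 0) = u"
  by (rule ext) (simp add: vsub_def Zp_modI)

lemma vsub_eq_zero_iff:
  assumes "0 < p" "u \<in> Zp_space p d" "w \<in> Zp_space p d"
  shows "vsub p u w = (\<lambda>_. 0) \<longleftrightarrow> u = w"
  using assms vadd_eq_iff[of p u d w w] vadd_zero_left[of p w d] vsub_self
  by (metis vadd_vsub)

lemma finite_Zp: "finite (Zp_space p d)"
proof -
  have "Zp_space p d \<subseteq> (\<lambda>g i. if i < d then g i else 0) ` (PiE {..<d} (\<lambda>_. {0..<int p}))"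
  proof
    fix v assume v: "v \<in> Zp_space p d"
    show "v \<in> (\<lambda>g i. if i < d then g i else 0) ` (PiE {..<d} (\<lambda>_. {0..<int p}))"
    proof
      show "v = (\<lambda>i. if i < d then restrict v {..<d} i else 0)"
        using v by (auto simp: Zp_space_def)
      show "restrict v {..<d} \<in> PiE {..<d} (\<lambda>_. {0..<int p})"
        using v by (auto simp: Zp_space_def)
    qed
  qed
  moreover have "finite (PiE {..<d} (\<lambda>_. {0..<int p}))"
    by (rule finite_PiE) auto
  ultimately show ?thesis using finite_subset by blast
qed


locale setting =
  fixes n :: nat
    and p r m d :: "nat \<Rightarrow> nat"
    and b :: "nat \<Rightarrow> (nat \<Rightarrow> int) \<Rightarrow> (nat \<Rightarrow> int) \<Rightarrow> int"
    and f :: "nat \<Rightarrow> (nat \<Rightarrow> int) \<Rightarrow> (nat \<Rightarrow> int)"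
  assumes n_gt: "n > 1"
    and p_prime: "\<forall>z<n. prime (p z)"
    and p_distinct: "inj_on p {..<n}"
    and r_pos: "\<forall>z<n. 0 < r z"
    and m_ge: "\<forall>z<n. r z \<le> m z \<and> r (cpred n z) \<le> m z"
    and b_form: "\<forall>z<n. nonsing_sym_bilinear (p z) (Zp_space (p z) (d z)) (b z)"
    and f_orth: "\<forall>z<n. in_orth (p z) (Zp_space (p z) (d z)) (b z) (f z)"
    and f_order: "\<forall>z<n. perm_order (Zp_space (p z) (d z)) (f z) (p (cpred n z))"
begin

lemma aux2: assumes a: "0 \<le> x" "x < P" "x = (x + x) mod P" shows "x = (0::int)"
proof (cases "x + x < P")
  case True
  then show ?thesis using a by simp
next
  case False
  have "(x + x) mod P = (x + x - P) mod P" by (simp add: mod_diff_right_eq[symmetric])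
  also have "\<dots> = x + x - P" using a False by (intro mod_pos_pos_trivial) auto
  finally show ?thesis using a by simp
qed

abbreviation V where "V z \<equiv> Zp_space (p z) (d z)"

lemma cpred_lt: "cpred n z < n"
  using n_gt by (simp add: cpred_def)

lemma p_gt1: "z < n \<Longrightarrow> 1 < p z"
  using p_prime prime_gt_1_nat by blast

lemma p_pos: "z < n \<Longrightarrow> 0 < p z"
  using p_gt1 by fastforce

lemma q_pos: "0 < p (cpred n z)"
  using p_pos cpred_lt by blast

lemma f_bij: "z < n \<Longrightarrow> bij_betw (f z) (V z) (V z)"
  using f_orth by (simp add: in_orth_def)

lemma f_in: "z < n \<Longrightarrow> v \<in> V z \<Longrightarrow> f z v \<in> V z"
  using f_bij bij_betwE by blast

lemma f_add: "z < n \<Longrightarrow> u \<in> V z \<Longrightarrow> v \<in> V z \<Longrightarrow> f z (vadd (p z) u v) = vadd (p z) (f z u) (f z v)"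
  using f_orth by (simp add: in_orth_def)

lemma f_b: "z < n \<Longrightarrow> u \<in> V z \<Longrightarrow> v \<in> V z \<Longrightarrow> b z (f z u) (f z v) = b z u v"
  using f_orth by (simp add: in_orth_def)

lemma b_range: "z < n \<Longrightarrow> u \<in> V z \<Longrightarrow> v \<in> V z \<Longrightarrow> 0 \<le> b z u v \<and> b z u v < int (p z)"
  using b_form by (simp add: nonsing_sym_bilinear_def)

lemma b_mod: "z < n \<Longrightarrow> u \<in> V z \<Longrightarrow> v \<in> V z \<Longrightarrow> b z u v mod int (p z) = b z u v"
  using b_range by (simp add: mod_pos_pos_trivial)

lemma b_sym: "z < n \<Longrightarrow> u \<in> V z \<Longrightarrow> v \<in> V z \<Longrightarrow> b z u v = b z v u"
  using b_form by (simp add: nonsing_sym_bilinear_def)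

lemma b_addl: "z < n \<Longrightarrow> u \<in> V z \<Longrightarrow> v \<in> V z \<Longrightarrow> w \<in> V z \<Longrightarrow>
   b z (vadd (p z) u v) w = (b z u w + b z v w) mod int (p z)"
  using b_form by (simp add: nonsing_sym_bilinear_def)

lemma b_addr: "z < n \<Longrightarrow> u \<in> V z \<Longrightarrow> v \<in> V z \<Longrightarrow> w \<in> V z \<Longrightarrow>
   b z w (vadd (p z) u v) = (b z w u + b z w v) mod int (p z)"
  using b_addl b_sym vadd_in p_pos by metis

lemma b_nonsing: assumes "z < n" "u \<in> V z" "u \<noteq> (\<lambda>_. 0)" shows "\<exists>v\<in>V z. b z u v \<noteq> 0"
proof -
  have "nonsing_sym_bilinear (p z) (V z) (b z)" using b_form assms by blast
  then have "\<not> (\<forall>v\<in>V z. b z u v = 0)" using assms unfolding nonsing_sym_bilinear_def by blast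
  then show ?thesis by blast
qed

lemma b_zero_l: assumes "z < n" "v \<in> V z" shows "b z (\<lambda>_. 0) v = 0"
proof -
  have z: "(\<lambda>_. 0) \<in> V z" using Zp_zero p_pos assms by blast
  have "vadd (p z) (\<lambda>_. 0) (\<lambda>_. 0) = (\<lambda>_. 0)" by (simp add: vadd_def)
  then have "b z (\<lambda>_. 0) v = (b z (\<lambda>_. 0) v + b z (\<lambda>_. 0) v) mod int (p z)"
    using b_addl[OF assms(1) z z assms(2)] by simp
  moreover have "0 \<le> b z (\<lambda>_. 0) v" "b z (\<lambda>_. 0) v < int (p z)" using b_range[OF assms(1) z assms(2)] by auto
  ultimately show ?thesis using aux2 by blast
qed

lemma b_zero_r: "z < n \<Longrightarrow> v \<in> V z \<Longrightarrow> b z v (\<lambda>_. 0) = 0"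
  using b_zero_l b_sym Zp_zero p_pos by metis

lemma f_zero: assumes "z < n" shows "f z (\<lambda>_. 0) = (\<lambda>_. 0)"
proof -
  have z: "(\<lambda>_. 0) \<in> V z" using Zp_zero p_pos assms by blast
  have fz: "f z (\<lambda>_. 0) \<in> V z" using f_in assms z by blast
  have "vadd (p z) (\<lambda>_. 0) (\<lambda>_. 0) = (\<lambda>_. 0)" by (simp add: vadd_def)
  then have "f z (\<lambda>_. 0) = vadd (p z) (f z (\<lambda>_. 0)) (f z (\<lambda>_. 0))"
    using f_add[OF assms z z] by simp
  then have "f z (\<lambda>_. 0) = vsub (p z) (f z (\<lambda>_. 0)) (f z (\<lambda>_. 0))"
    using vadd_eq_iff[OF p_pos[OF assms] fz fz fz] by metis
  then show ?thesis by (simp add: vsub_self)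
qed

lemma f_sub: assumes "z < n" "u \<in> V z" "v \<in> V z"
  shows "f z (vsub (p z) u v) = vsub (p z) (f z u) (f z v)"
proof -
  have P: "0 < p z" using p_pos assms by blast
  have "vadd (p z) (f z (vsub (p z) u v)) (f z v) = f z u"
    using f_add[OF assms(1) vsub_in[OF P assms(2,3)] assms(3)] vadd_vsub[OF P assms(3,2)] by simp
  then show ?thesis
    using vadd_eq_iff[OF P f_in[OF assms(1) vsub_in[OF P assms(2,3)]] f_in[OF assms(1,3)] f_in[OF assms(1,2)]]
    by blast
qed

lemma fpow_in: "z < n \<Longrightarrow> v \<in> V z \<Longrightarrow> (f z ^^ k) v \<in> V z"
  by (induction k) (auto intro: f_in)

lemma fpow_add: "z < n \<Longrightarrow> u \<in> V z \<Longrightarrow> v \<in> V z \<Longrightarrow>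
   (f z ^^ k) (vadd (p z) u v) = vadd (p z) ((f z ^^ k) u) ((f z ^^ k) v)"
  by (induction k) (auto simp: f_add fpow_in)

lemma fpow_sub: "z < n \<Longrightarrow> u \<in> V z \<Longrightarrow> v \<in> V z \<Longrightarrow>
   (f z ^^ k) (vsub (p z) u v) = vsub (p z) ((f z ^^ k) u) ((f z ^^ k) v)"
  by (induction k) (auto simp: f_sub fpow_in)

lemma fpow_b: "z < n \<Longrightarrow> u \<in> V z \<Longrightarrow> v \<in> V z \<Longrightarrow> b z ((f z ^^ k) u) ((f z ^^ k) v) = b z u v"
  by (induction k) (auto simp: f_b fpow_in)

lemma fpow_zero: "z < n \<Longrightarrow> (f z ^^ k) (\<lambda>_. 0) = (\<lambda>_. 0)"
  by (induction k) (auto simp: f_zero)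

lemma fpow_q: "z < n \<Longrightarrow> v \<in> V z \<Longrightarrow> (f z ^^ p (cpred n z)) v = v"
  using f_order by (simp add: perm_order_def)

lemma fpow_mult_q: "z < n \<Longrightarrow> v \<in> V z \<Longrightarrow> (f z ^^ (p (cpred n z) * c)) v = v"
proof (induction c)
  case (Suc c)
  have "(f z ^^ (p (cpred n z) * Suc c)) v = (f z ^^ p (cpred n z)) ((f z ^^ (p (cpred n z) * c)) v)"
    by (simp add: funpow_add)
  then show ?case using Suc by (simp add: fpow_q)
qed simp

lemma fpow_mod: assumes "z < n" "v \<in> V z"
  shows "(f z ^^ k) v = (f z ^^ (k mod p (cpred n z))) v"
proof -
  have "k = k mod p (cpred n z) + p (cpred n z) * (k div p (cpred n z))" by simp
  then have "(f z ^^ k) v = (f z ^^ (k mod p (cpred n z))) ((f z ^^ (p (cpred n z) * (k div p (cpred n z)))) v)"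
    by (metis funpow_add o_apply)
  then show ?thesis using fpow_mult_q assms by simp
qed

lemma fpow_cong: assumes "z < n" "v \<in> V z" "k mod p (cpred n z) = k' mod p (cpred n z)"
  shows "(f z ^^ k) v = (f z ^^ k') v"
  using fpow_mod assms by metis

lemma fpow_comp: "(f z ^^ a) ((f z ^^ c) v) = (f z ^^ (a + c)) v"
  by (simp add: funpow_add)

end

context setting begin

abbreviation "T \<equiv> TT n p d m"
abbreviation "S \<equiv> SS n p r"

lemma T_mem: "t \<in> T \<longleftrightarrow> (\<forall>z<n. \<forall>j<m z. t z j \<in> V z) \<and> (\<forall>z j. \<not> (z < n \<and> j < m z) \<longrightarrow> t z j = (\<lambda>_. 0))"
  unfolding TT_def Tz_def by (auto; metis not_le)

lemma T_in: "t \<in> T \<Longrightarrow> z < n \<Longrightarrow> j < m z \<Longrightarrow> t z j \<in> V z"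
  by (simp add: T_mem)

lemma T_out: "t \<in> T \<Longrightarrow> \<not> (z < n \<and> j < m z) \<Longrightarrow> t z j = (\<lambda>_. 0)"
  by (simp add: T_mem)

lemma T_inV: "t \<in> T \<Longrightarrow> z < n \<Longrightarrow> t z j \<in> V z"
  using T_in T_out Zp_zero p_pos by (metis)

lemma T_ext: "t \<in> T \<Longrightarrow> t' \<in> T \<Longrightarrow> (\<And>z j. z < n \<Longrightarrow> j < m z \<Longrightarrow> t z j = t' z j) \<Longrightarrow> t = t'"
  by (intro ext) (metis T_out)

lemma S_mem: "s \<in> S \<longleftrightarrow> (\<forall>z<n. s z \<in> Zp_space (p z) (r z)) \<and> (\<forall>z\<ge>n. s z = (\<lambda>_. 0))"
  unfolding SS_def by auto

lemma S_in: "s \<in> S \<Longrightarrow> z < n \<Longrightarrow> s z \<in> Zp_space (p z) (r z)"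
  by (simp add: S_mem)

lemma S_out: "s \<in> S \<Longrightarrow> \<not> z < n \<Longrightarrow> s z = (\<lambda>_. 0)"
  by (simp add: S_mem)

lemma S_ext: "s \<in> S \<Longrightarrow> s' \<in> S \<Longrightarrow> (\<And>z. z < n \<Longrightarrow> s z = s' z) \<Longrightarrow> s = s'"
  by (intro ext) (metis S_out)

lemma S_mod: "s \<in> S \<Longrightarrow> z < n \<Longrightarrow> s z i mod int (p z) = s z i"
  using S_in Zp_modI p_pos by blast

lemma S_nonneg: "s \<in> S \<Longrightarrow> z < n \<Longrightarrow> 0 \<le> s z i"
  by (metis S_mod p_pos Euclidean_Rings.pos_mod_sign of_nat_0_less_iff)

lemma tadd_eq: "tadd n p t t' z j = (if z < n then vadd (p z) (t z j) (t' z j) else (\<lambda>_. 0))"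
  by (simp add: tadd_def vadd_def)

lemma tadd_in: assumes "t \<in> T" "t' \<in> T" shows "tadd n p t t' \<in> T"
  unfolding T_mem
proof (intro conjI allI impI)
  fix z j assume "z < n" "j < m z"
  then show "tadd n p t t' z j \<in> V z" using assms by (simp add: tadd_eq vadd_in p_pos T_in)
next
  fix z j assume "\<not> (z < n \<and> j < m z)"
  then show "tadd n p t t' z j = (\<lambda>_. 0)" using assms T_out by (auto simp: tadd_eq vadd_def)
qed

lemma sadd_in: assumes "s \<in> S" "s' \<in> S" shows "sadd n p s s' \<in> S"
  unfolding S_mem
proof (intro conjI allI impI)
  fix z assume z: "z < n"
  have "sadd n p s s' z = vadd (p z) (s z) (s' z)" using z by (simp add: sadd_def vadd_def)
  then show "sadd n p s s' z \<in> Zp_space (p z) (r z)" using assms z by (simp add: vadd_in p_pos S_in)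
qed (simp add: sadd_def)

definition tneg :: "(nat \<Rightarrow> nat \<Rightarrow> nat \<Rightarrow> int) \<Rightarrow> (nat \<Rightarrow> nat \<Rightarrow> nat \<Rightarrow> int)" where
  "tneg t = (\<lambda>z j i. if z < n then (- t z j i) mod int (p z) else 0)"

definition sneg :: "(nat \<Rightarrow> nat \<Rightarrow> int) \<Rightarrow> (nat \<Rightarrow> nat \<Rightarrow> int)" where
  "sneg s = (\<lambda>z i. if z < n then (- s z i) mod int (p z) else 0)"

lemma tneg_eq: "tneg t z j = (if z < n then vsub (p z) (\<lambda>_. 0) (t z j) else (\<lambda>_. 0))"
  by (simp add: tneg_def vsub_def)

lemma tneg_in: assumes "t \<in> T" shows "tneg t \<in> T"
  unfolding T_mem
proof (intro conjI allI impI)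
  fix z j assume "z < n" "j < m z"
  then show "tneg t z j \<in> V z" using assms by (simp add: tneg_eq vsub_in p_pos T_in Zp_zero)
next
  fix z j assume "\<not> (z < n \<and> j < m z)"
  then show "tneg t z j = (\<lambda>_. 0)" using assms T_out by (auto simp: tneg_def)
qed

lemma sneg_in: assumes "s \<in> S" shows "sneg s \<in> S"
  unfolding S_mem
proof (intro conjI allI impI)
  fix z assume z: "z < n"
  have "sneg s z = vsub (p z) (\<lambda>_. 0) (s z)" using z by (simp add: sneg_def vsub_def)
  then show "sneg s z \<in> Zp_space (p z) (r z)" using assms z by (simp add: vsub_in p_pos S_in Zp_zero)
qed (simp add: sneg_def)

lemma zeroT: "(\<lambda>_ _ _. 0) \<in> T"
  by (simp add: T_mem Zp_zero p_pos)

lemma zeroS: "(\<lambda>_ _. 0) \<in> S"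
  by (simp add: S_mem Zp_zero p_pos)

end

context setting begin

lemma bT_eq: "bT n p r m b t t' z i = (if z < n then
     (if i + 1 < r z then b z (t z i) (t' z i)
      else if i + 1 = r z then (\<Sum>j<m z. b z (t z j) (t' z j)) mod int (p z) else 0) else 0)"
  by (simp add: bT_def bprime_def)

lemma bT_in: assumes "t \<in> T" "t' \<in> T" shows "bT n p r m b t t' \<in> S"
  unfolding S_mem
proof (intro conjI allI impI)
  fix z assume z: "z < n"
  show "bT n p r m b t t' z \<in> Zp_space (p z) (r z)"
    unfolding Zp_mem[OF p_pos[OF z]]
  proof (intro conjI allI impI)
    fix i show "bT n p r m b t t' z i mod int (p z) = bT n p r m b t t' z i"
      using z assms by (simp add: bT_eq b_mod T_inV)
  next
    fix i assume "r z \<le> i" then show "bT n p r m b t t' z i = 0" using z by (simp add: bT_eq)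
  qed
qed (simp add: bT_def)

lemma bT_sym: assumes "t \<in> T" "t' \<in> T" shows "bT n p r m b t t' = bT n p r m b t' t"
proof (intro ext)
  fix z i show "bT n p r m b t t' z i = bT n p r m b t' t z i"
  proof (cases "z < n")
    case True
    then have "\<And>j. b z (t z j) (t' z j) = b z (t' z j) (t z j)" using assms b_sym T_inV by blast
    then show ?thesis by (simp add: bT_eq)
  qed (simp add: bT_eq)
qed

lemma bT_addl: assumes "t \<in> T" "t' \<in> T" "t'' \<in> T" "z < n"
  shows "bT n p r m b (tadd n p t t') t'' z i = (bT n p r m b t t'' z i + bT n p r m b t' t'' z i) mod int (p z)"
proof -
  have B: "\<And>j. b z (vadd (p z) (t z j) (t' z j)) (t'' z j) = (b z (t z j) (t'' z j) + b z (t' z j) (t'' z j)) mod int (p z)"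
    using assms by (simp add: b_addl T_inV)
  have "(\<Sum>j<m z. (b z (t z j) (t'' z j) + b z (t' z j) (t'' z j)) mod int (p z)) mod int (p z)
      = ((\<Sum>j<m z. b z (t z j) (t'' z j)) mod int (p z) + (\<Sum>j<m z. b z (t' z j) (t'' z j)) mod int (p z)) mod int (p z)"
    by (simp add: mod_sum_eq sum.distrib mod_simps)
  then show ?thesis using assms B by (simp add: bT_eq tadd_eq b_mod T_inV)
qed

lemma bT_addr: assumes "t \<in> T" "t' \<in> T" "t'' \<in> T" "z < n"
  shows "bT n p r m b t'' (tadd n p t t') z i = (bT n p r m b t'' t z i + bT n p r m b t'' t' z i) mod int (p z)"
  using bT_addl[OF assms] bT_sym assms tadd_in by metis

definition expo :: "(nat \<Rightarrow> nat \<Rightarrow> int) \<Rightarrow> nat \<Rightarrow> nat \<Rightarrow> nat" where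
  "expo s z j = (if j + 1 < r (cpred n z) then nat (s (cpred n z) j + s (cpred n z) (r (cpred n z) - 1))
                 else nat (s (cpred n z) (r (cpred n z) - 1)))"

lemma alpha_eq: "alpha n r m f s t z j = (if z < n \<and> j < m z then (f z ^^ expo s z j) (t z j) else (\<lambda>_. 0))"
  by (simp add: alpha_def fshift_def expo_def)

lemma alpha_in: assumes "t \<in> T" shows "alpha n r m f s t \<in> T"
  using assms by (auto simp: T_mem alpha_eq fpow_in)

lemma alpha_add: assumes "t \<in> T" "t' \<in> T"
  shows "alpha n r m f s (tadd n p t t') = tadd n p (alpha n r m f s t) (alpha n r m f s t')"
  by (rule T_ext) (use assms in \<open>auto simp: tadd_in alpha_in alpha_eq tadd_eq fpow_add T_in\<close>)

lemma alpha_zero_s: assumes "t \<in> T" shows "alpha n r m f (\<lambda>_ _. 0) t = t"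
  by (rule T_ext) (use assms in \<open>auto simp: alpha_in alpha_eq expo_def\<close>)

lemma bT_alpha: assumes "t \<in> T" "t' \<in> T"
  shows "bT n p r m b (alpha n r m f s t) (alpha n r m f s t') = bT n p r m b t t'"
proof (intro ext)
  fix z i show "bT n p r m b (alpha n r m f s t) (alpha n r m f s t') z i = bT n p r m b t t' z i"
  proof (cases "z < n")
    case z: True
    have 1: "i < m z \<Longrightarrow> b z ((f z ^^ expo s z i) (t z i)) ((f z ^^ expo s z i) (t' z i)) = b z (t z i) (t' z i)"
      using z assms by (simp add: fpow_b T_in)
    have 2: "(\<Sum>j<m z. b z (alpha n r m f s t z j) (alpha n r m f s t' z j)) = (\<Sum>j<m z. b z (t z j) (t' z j))"
      using z assms by (intro sum.cong) (auto simp: alpha_eq fpow_b T_in)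
    have "r z \<le> m z" using m_ge z by blast
    then show ?thesis using z 1 2 by (auto simp: bT_eq alpha_eq)
  qed (simp add: bT_eq)
qed

lemma expo_cong: assumes "s \<in> S" "s' \<in> S" "z < n"
  shows "(expo s z j + expo s' z j) mod p (cpred n z) = expo (sadd n p s s') z j mod p (cpred n z)"
proof -
  let ?c = "cpred n z" let ?R = "r ?c - 1"
  have c: "?c < n" by (rule cpred_lt)
  have nn: "\<And>i. 0 \<le> s ?c i" "\<And>i. 0 \<le> s' ?c i" using S_nonneg assms c by auto
  have sa: "\<And>i. sadd n p s s' ?c i = (s ?c i + s' ?c i) mod int (p ?c)" using c by (simp add: sadd_def)
  have nn2: "\<And>i. 0 \<le> (s ?c i + s' ?c i) mod int (p ?c)" using q_pos by simp
  have "int (expo s z j + expo s' z j) mod int (p ?c) = int (expo (sadd n p s s') z j) mod int (p ?c)"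
  proof (cases "j + 1 < r ?c")
    case True
    have e1: "int (expo s z j + expo s' z j) = (s ?c j + s' ?c j) + (s ?c ?R + s' ?c ?R)"
      using True nn by (simp add: expo_def)
    have e2: "int (expo (sadd n p s s') z j) = (s ?c j + s' ?c j) mod int (p ?c) + (s ?c ?R + s' ?c ?R) mod int (p ?c)"
      using True nn2 by (simp add: expo_def sa)
    show ?thesis unfolding e1 e2 by (simp add: mod_add_eq)
  next
    case False
    have e1: "int (expo s z j + expo s' z j) = (s ?c ?R + s' ?c ?R)"
      using False nn by (simp add: expo_def)
    have e2: "int (expo (sadd n p s s') z j) = (s ?c ?R + s' ?c ?R) mod int (p ?c)"
      using False nn2 by (simp add: expo_def sa)
    show ?thesis unfolding e1 e2 by simp
  qed
  then have "int ((expo s z j + expo s' z j) mod p ?c) = int (expo (sadd n p s s') z j mod p ?c)"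
    by (simp add: zmod_int)
  then show ?thesis by linarith
qed

lemma alpha_comp: assumes "s \<in> S" "s' \<in> S" "t \<in> T"
  shows "alpha n r m f s (alpha n r m f s' t) = alpha n r m f (sadd n p s s') t"
proof (rule T_ext)
  fix z j assume z: "z < n" and j: "j < m z"
  have "(f z ^^ expo s z j) ((f z ^^ expo s' z j) (t z j)) = (f z ^^ expo (sadd n p s s') z j) (t z j)"
    unfolding fpow_comp using expo_cong[OF assms(1,2) z] z j assms(3)
    by (intro fpow_cong) (auto simp: T_in)
  then show "alpha n r m f s (alpha n r m f s' t) z j = alpha n r m f (sadd n p s s') t z j"
    using z j by (simp add: alpha_eq)
qed (use assms in \<open>auto intro: alpha_in\<close>)

end

context setting begin

abbreviation "A \<equiv> asym_carrier n p d m r"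
abbreviation "pl \<equiv> asym_add n p r m b"
abbreviation "tm \<equiv> asym_mul n p r m f"
abbreviation "B \<equiv> bT n p r m b"
abbreviation "al \<equiv> alpha n r m f"

lemma A_mem: "x \<in> A \<longleftrightarrow> fst x \<in> T \<and> snd x \<in> S"
  by (cases x) (simp add: asym_carrier_def)

lemma T_mod: "t \<in> T \<Longrightarrow> z < n \<Longrightarrow> t z j i mod int (p z) = t z j i"
  using T_inV Zp_modI p_pos by blast

lemma bT_zero_l: assumes "t \<in> T" shows "B (\<lambda>_ _ _. 0) t = (\<lambda>_ _. 0)"
proof (intro ext)
  fix z i show "B (\<lambda>_ _ _. 0) t z i = 0"
    using assms by (cases "z < n") (auto simp: bT_eq b_zero_l T_inV)
qed

lemma bT_zero_r: assumes "t \<in> T" shows "B t (\<lambda>_ _ _. 0) = (\<lambda>_ _. 0)"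
  using bT_zero_l bT_sym assms zeroT by metis

lemma pl_in: "x \<in> A \<Longrightarrow> y \<in> A \<Longrightarrow> pl x y \<in> A"
  by (simp add: A_mem asym_add_def tadd_in sadd_in bT_in)

lemma tm_in: "x \<in> A \<Longrightarrow> y \<in> A \<Longrightarrow> tm x y \<in> A"
  by (simp add: A_mem asym_mul_def tadd_in sadd_in alpha_in)

lemma zero_in: "asym_zero \<in> A"
  by (simp add: A_mem asym_zero_def zeroT zeroS)

lemma tadd_assoc: "tadd n p (tadd n p t t') t'' = tadd n p t (tadd n p t' t'')"
  by (intro ext) (simp add: tadd_def mod_simps ac_simps)

lemma tadd_comm: "tadd n p t t' = tadd n p t' t"
  by (intro ext) (simp add: tadd_def ac_simps)

lemma sadd_comm: "sadd n p s s' = sadd n p s' s"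
  by (intro ext) (simp add: sadd_def ac_simps)

lemma tadd_zero_l: "t \<in> T \<Longrightarrow> tadd n p (\<lambda>_ _ _. 0) t = t"
  by (intro ext) (auto simp: tadd_def T_mod T_out)

lemma sadd_zero_l: "s \<in> S \<Longrightarrow> sadd n p (\<lambda>_ _. 0) s = s"
  by (intro ext) (auto simp: sadd_def S_mod S_out)

lemma sadd_zero_r: "s \<in> S \<Longrightarrow> sadd n p s (\<lambda>_ _. 0) = s"
  by (intro ext) (auto simp: sadd_def S_mod S_out)

lemma pl_assoc: assumes "x \<in> A" "y \<in> A" "w \<in> A" shows "pl (pl x y) w = pl x (pl y w)"
proof -
  obtain tx sx ty sy tw sw where xs: "x = (tx, sx)" "y = (ty, sy)" "w = (tw, sw)" by (cases x, cases y, cases w) auto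
  have t: "tx \<in> T" "ty \<in> T" "tw \<in> T" using assms xs by (auto simp: A_mem)
  have "sadd n p (sadd n p (sadd n p (sadd n p sx sy) (B tx ty)) sw) (B (tadd n p tx ty) tw)
      = sadd n p (sadd n p sx (sadd n p (sadd n p sy sw) (B ty tw))) (B tx (tadd n p ty tw))"
  proof (intro ext)
    fix z i
    show "sadd n p (sadd n p (sadd n p (sadd n p sx sy) (B tx ty)) sw) (B (tadd n p tx ty) tw) z i
      = sadd n p (sadd n p sx (sadd n p (sadd n p sy sw) (B ty tw))) (B tx (tadd n p ty tw)) z i"
      apply (cases "z < n")
       apply (simp_all add: sadd_def bT_addl bT_addr t mod_simps)
      apply (simp add: ac_simps)
      done
  qed
  then show ?thesis using xs by (simp add: asym_add_def tadd_assoc)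
qed

lemma pl_comm: assumes "x \<in> A" "y \<in> A" shows "pl x y = pl y x"
  using assms by (cases x, cases y) (simp add: asym_add_def tadd_comm sadd_comm bT_sym A_mem)

lemma pl_zero: assumes "x \<in> A" shows "pl asym_zero x = x"
  using assms by (cases x) (simp add: asym_add_def asym_zero_def A_mem tadd_zero_l sadd_zero_l sadd_zero_r bT_zero_l)

lemma tadd_tneg: "tadd n p (tneg t) t = (\<lambda>_ _ _. 0)"
  by (intro ext) (simp add: tadd_def tneg_def mod_simps)

lemma sadd_sneg: "sadd n p (sneg s) s = (\<lambda>_ _. 0)"
  by (intro ext) (simp add: sadd_def sneg_def mod_simps)

lemma pl_inv_ex: assumes "x \<in> A" shows "pl (tneg (fst x), sneg (sadd n p (snd x) (B (tneg (fst x)) (fst x)))) x = asym_zero"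
proof -
  obtain t s where xs: "x = (t, s)" by (cases x)
  have "sadd n p (sadd n p (sneg (sadd n p s (B (tneg t) t))) s) (B (tneg t) t) = (\<lambda>_ _. 0)"
    by (intro ext) (simp add: sadd_def sneg_def mod_simps)
  then show ?thesis using xs by (simp add: asym_add_def asym_zero_def tadd_tneg)
qed

lemma pl_inv_in: assumes "x \<in> A" shows "(tneg (fst x), sneg (sadd n p (snd x) (B (tneg (fst x)) (fst x)))) \<in> A"
  using assms by (simp add: A_mem tneg_in sneg_in sadd_in bT_in)

lemma add_comm_group: "comm_group (add_grp A pl asym_zero)"
proof (rule comm_groupI)
  fix x assume "x \<in> carrier (add_grp A pl asym_zero)"
  then show "\<exists>y\<in>carrier (add_grp A pl asym_zero). y \<otimes>\<^bsub>add_grp A pl asym_zero\<^esub> x = \<one>\<^bsub>add_grp A pl asym_zero\<^esub>"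
    using pl_inv_ex pl_inv_in by (simp add: add_grp_def) blast
next
  fix x y assume "x \<in> carrier (add_grp A pl asym_zero)" "y \<in> carrier (add_grp A pl asym_zero)"
  then show "x \<otimes>\<^bsub>add_grp A pl asym_zero\<^esub> y = y \<otimes>\<^bsub>add_grp A pl asym_zero\<^esub> x"
    using pl_comm by (simp add: add_grp_def)
qed (simp_all add: add_grp_def pl_in zero_in pl_assoc pl_zero)

end

context setting begin

lemma sadd_assoc: "sadd n p (sadd n p s s') s'' = sadd n p s (sadd n p s' s'')"
  by (intro ext) (simp add: sadd_def mod_simps ac_simps)

lemma tm_assoc: assumes "x \<in> A" "y \<in> A" "w \<in> A" shows "tm (tm x y) w = tm x (tm y w)"
proof -
  obtain tx sx ty sy tw sw where xs: "x = (tx, sx)" "y = (ty, sy)" "w = (tw, sw)" by (cases x, cases y, cases w) auto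
  have t: "tx \<in> T" "ty \<in> T" "tw \<in> T" "sx \<in> S" "sy \<in> S" "sw \<in> S" using assms xs by (auto simp: A_mem)
  have "al sx (tadd n p ty (al sy tw)) = tadd n p (al sx ty) (al (sadd n p sx sy) tw)"
    using t by (simp add: alpha_add alpha_in alpha_comp)
  then show ?thesis using xs by (simp add: asym_mul_def tadd_assoc sadd_assoc)
qed

lemma tm_zero: assumes "x \<in> A" shows "tm asym_zero x = x"
  using assms by (cases x) (simp add: asym_mul_def asym_zero_def A_mem tadd_zero_l sadd_zero_l alpha_zero_s)

lemma tm_inv_ex: assumes "x \<in> A" shows "tm (tneg (al (sneg (snd x)) (fst x)), sneg (snd x)) x = asym_zero"
  using assms by (cases x) (simp add: asym_mul_def asym_zero_def tadd_tneg sadd_sneg)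

lemma tm_inv_in: assumes "x \<in> A" shows "(tneg (al (sneg (snd x)) (fst x)), sneg (snd x)) \<in> A"
  using assms by (simp add: A_mem tneg_in sneg_in alpha_in)

lemma mul_group: "group (mul_grp A tm asym_zero)"
proof (rule groupI)
  fix x assume "x \<in> carrier (mul_grp A tm asym_zero)"
  then show "\<exists>y\<in>carrier (mul_grp A tm asym_zero). y \<otimes>\<^bsub>mul_grp A tm asym_zero\<^esub> x = \<one>\<^bsub>mul_grp A tm asym_zero\<^esub>"
    using tm_inv_ex tm_inv_in by (simp add: mul_grp_def) blast
qed (simp_all add: mul_grp_def tm_in zero_in tm_assoc tm_zero)

lemma brace_id: assumes "a \<in> A" "x \<in> A" "y \<in> A" shows "pl (tm a (pl x y)) a = pl (tm a x) (tm a y)"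
proof -
  obtain ta sa tx sx ty sy where xs: "a = (ta, sa)" "x = (tx, sx)" "y = (ty, sy)" by (cases a, cases x, cases y) auto
  have t: "ta \<in> T" "tx \<in> T" "ty \<in> T" "sa \<in> S" "sx \<in> S" "sy \<in> S" using assms xs by (auto simp: A_mem)
  define ax where "ax = al sa tx"
  define ay where "ay = al sa ty"
  have ai: "ax \<in> T" "ay \<in> T" using t by (simp_all add: ax_def ay_def alpha_in)
  have al2: "al sa (tadd n p tx ty) = tadd n p ax ay" using t by (simp add: ax_def ay_def alpha_add)
  have bxy: "B ax ay = B tx ty" using t by (simp add: ax_def ay_def bT_alpha)
  have T1: "tadd n p (tadd n p ta (tadd n p ax ay)) ta = tadd n p (tadd n p ta ax) (tadd n p ta ay)"
    apply (intro ext)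
    apply (simp add: tadd_def mod_simps)
    done
  have S1: "sadd n p (sadd n p (sadd n p sa (sadd n p (sadd n p sx sy) (B tx ty))) sa) (B (tadd n p ta (tadd n p ax ay)) ta)
     = sadd n p (sadd n p (sadd n p sa sx) (sadd n p sa sy)) (B (tadd n p ta ax) (tadd n p ta ay))"
  proof (intro ext)
    fix z i
    show "sadd n p (sadd n p (sadd n p sa (sadd n p (sadd n p sx sy) (B tx ty))) sa) (B (tadd n p ta (tadd n p ax ay)) ta) z i
     = sadd n p (sadd n p (sadd n p sa sx) (sadd n p sa sy)) (B (tadd n p ta ax) (tadd n p ta ay)) z i"
    proof (cases "z < n")
      case z: True
      have e1: "B (tadd n p ta (tadd n p ax ay)) ta z i = (B ta ta z i + (B ax ta z i + B ay ta z i) mod int (p z)) mod int (p z)"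
        using z t ai by (simp add: bT_addl tadd_in)
      have e2: "B (tadd n p ta ax) (tadd n p ta ay) z i
          = ((B ta ta z i + B ax ta z i) mod int (p z) + (B ta ay z i + B ax ay z i) mod int (p z)) mod int (p z)"
        using z t ai by (simp add: bT_addl bT_addr tadd_in)
      have e3: "B ta ay = B ay ta" using t ai bT_sym by blast
      show ?thesis
        apply (simp add: z sadd_def e1 e2 e3 bxy mod_simps)
        apply (simp add: ac_simps)
        done
    qed (simp add: sadd_def)
  qed
  show ?thesis using xs T1 S1 by (simp add: asym_add_def asym_mul_def al2 ax_def ay_def)
qed

lemma is_left_brace: "left_brace A pl asym_zero tm"
  unfolding left_brace_def using add_comm_group mul_group brace_id by blast

end

lemma inv_mod: assumes P: "prime (P::nat)" and c: "c mod int P \<noteq> 0"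
  shows "\<exists>k::nat. (int k * c) mod int P = 1"
proof -
  have pi: "prime (int P)" using P by simp
  have "\<not> int P dvd c" using c by (simp add: dvd_eq_mod_eq_0)
  then have "coprime (int P) c" using pi prime_imp_coprime by blast
  then have g: "gcd c (int P) = 1" by (simp add: coprime_iff_gcd_eq_1 gcd.commute)
  obtain u v where uv: "u * c + v * int P = 1" using bezout_int[of c "int P"] g by auto
  have P1: "1 < int P" using P prime_gt_1_nat by simp
  have "(u * c) mod int P = 1"
  proof -
    have "(u * c) mod int P = (u * c + v * int P) mod int P" by simp
    then show ?thesis using uv P1 by simp
  qed
  moreover have "(int (nat (u mod int P)) * c) mod int P = (u * c) mod int P"
    using P1 by (simp add: mod_mult_left_eq)
  ultimately show ?thesis by metis
qed

lemma (in group) conj_right: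
  assumes "N \<lhd> G" "g \<in> carrier G" "h \<in> N" "h' \<in> carrier G" "h' \<otimes> g = g \<otimes> h"
  shows "h' \<in> N"
proof -
  have sub: "subgroup N G" and c: "\<forall>x \<in> carrier G. \<forall>h \<in> N. x \<otimes> h \<otimes> (inv x) \<in> N"
    using assms(1) normal_inv_iff by auto
  have hc: "h \<in> carrier G" using sub assms(3) subgroup.subset by blast
  have "h' = h' \<otimes> g \<otimes> inv g" using assms(2,4) by (simp add: m_assoc)
  also have "\<dots> = g \<otimes> h \<otimes> inv g" using assms(5) by simp
  finally show ?thesis using c assms(2,3) by simp
qed

lemma (in group) conj_left:
  assumes "N \<lhd> G" "g \<in> carrier G" "h \<in> N" "h' \<in> carrier G" "g \<otimes> h' = h \<otimes> g"
  shows "h' \<in> N"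
proof -
  have sub: "subgroup N G" using assms(1) normal_inv_iff by auto
  have hc: "h \<in> carrier G" using sub assms(3) subgroup.subset by blast
  have "h' \<otimes> inv g = inv g \<otimes> (g \<otimes> h') \<otimes> inv g" using assms(2,4) by (simp add: m_assoc[symmetric])
  also have "\<dots> = inv g \<otimes> h" using assms(5) assms(2) hc by (simp add: m_assoc)
  finally show ?thesis using conj_right[OF assms(1) inv_closed[OF assms(2)] assms(3) assms(4)] by simp
qed

lemma (in group) subgroup_cancel:
  assumes "subgroup H G" "u \<in> H" "v \<in> carrier G" "v \<otimes> u \<in> H"
  shows "v \<in> H"
proof -
  have uc: "u \<in> carrier G" using assms(1,2) subgroup.subset by blast
  have "v = (v \<otimes> u) \<otimes> inv u" using uc assms(3) by (simp add: m_assoc)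
  then show ?thesis using assms subgroup.m_closed subgroup.m_inv_closed by metis
qed

context setting begin

lemma add_group: "group (add_grp A pl asym_zero)"
  using add_comm_group comm_group.axioms(2) by blast

lemma lambda_eq: assumes "a \<in> A" "x \<in> A"
  shows "brace_lambda A pl asym_zero tm a x = (al (snd a) (fst x), sadd n p (snd x) (sneg (B (al (snd a) (fst x)) (fst a))))"
proof -
  interpret G: group "add_grp A pl asym_zero" by (rule add_group)
  obtain ta sa tx sx where xs: "a = (ta, sa)" "x = (tx, sx)" by (cases a, cases x) auto
  have t: "ta \<in> T" "tx \<in> T" "sa \<in> S" "sx \<in> S" using assms xs by (auto simp: A_mem)
  define v where "v = (al sa tx, sadd n p sx (sneg (B (al sa tx) ta)))"
  have vA: "v \<in> A" using t by (simp add: v_def A_mem alpha_in sadd_in sneg_in bT_in)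
  have "sadd n p (sadd n p (sadd n p sx (sneg (B (al sa tx) ta))) sa) (B (al sa tx) ta) = sadd n p sa sx"
    by (intro ext) (simp add: sadd_def sneg_def mod_simps add.commute)
  then have e: "pl v a = tm a x" using xs by (simp add: v_def asym_add_def asym_mul_def tadd_comm)
  have "brace_lambda A pl asym_zero tm a x = pl (pl v a) (inv\<^bsub>add_grp A pl asym_zero\<^esub> a)"
    by (simp add: brace_lambda_def e)
  also have "\<dots> = pl v (pl a (inv\<^bsub>add_grp A pl asym_zero\<^esub> a))"
    using G.m_assoc[of v a "inv\<^bsub>add_grp A pl asym_zero\<^esub> a"] vA assms G.inv_closed[of a]
    by (simp add: add_grp_def)
  also have "\<dots> = v" using G.r_inv[of a] G.r_one[of v] vA assms by (simp add: add_grp_def)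
  finally show ?thesis using xs by (simp add: v_def)
qed

definition Tv :: "nat \<Rightarrow> nat \<Rightarrow> (nat \<Rightarrow> int) \<Rightarrow> (nat \<Rightarrow> nat \<Rightarrow> nat \<Rightarrow> int)" where
  "Tv z j w = (\<lambda>z' j'. if z' = z \<and> j' = j then w else (\<lambda>_. 0))"

definition Se :: "nat \<Rightarrow> nat \<Rightarrow> int \<Rightarrow> (nat \<Rightarrow> nat \<Rightarrow> int)" where
  "Se z i c = (\<lambda>z' i'. if z' = z \<and> i' = i then c else 0)"

definition smul :: "nat \<Rightarrow> (nat \<Rightarrow> nat \<Rightarrow> int) \<Rightarrow> (nat \<Rightarrow> nat \<Rightarrow> int)" where
  "smul k s = (\<lambda>z i. if z < n then (int k * s z i) mod int (p z) else 0)"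

lemma Tv_in: "z < n \<Longrightarrow> j < m z \<Longrightarrow> w \<in> V z \<Longrightarrow> Tv z j w \<in> T"
  by (auto simp: T_mem Tv_def Zp_zero p_pos)

lemma Se_in: assumes "z < n" "i < r z" "0 \<le> c" "c < int (p z)" shows "Se z i c \<in> S"
  unfolding S_mem
proof (intro conjI allI impI)
  fix z' assume z': "z' < n"
  show "Se z i c z' \<in> Zp_space (p z') (r z')"
    unfolding Zp_space_def Se_def using assms z' p_pos[OF z'] by auto
qed (use assms in \<open>auto simp: Se_def\<close>)

lemma smul_in: assumes "s \<in> S" shows "smul k s \<in> S"
  unfolding S_mem
proof (intro conjI allI impI)
  fix z' assume z': "z' < n"
  have "s z' \<in> Zp_space (p z') (r z')" using assms z' S_in by blast
  then show "smul k s z' \<in> Zp_space (p z') (r z')"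
    unfolding Zp_space_def smul_def using z' p_pos[OF z'] by auto
qed (simp add: smul_def)

definition is_ideal where "is_ideal I \<longleftrightarrow> brace_ideal A pl asym_zero tm I"

lemma ideal_sub: "is_ideal I \<Longrightarrow> subgroup I (add_grp A pl asym_zero)"
  by (simp add: is_ideal_def brace_ideal_def brace_left_ideal_def)

lemma ideal_subset: "is_ideal I \<Longrightarrow> I \<subseteq> A"
  using subgroup.subset[OF ideal_sub] by (simp add: add_grp_def)

lemma ideal_pl: "is_ideal I \<Longrightarrow> x \<in> I \<Longrightarrow> y \<in> I \<Longrightarrow> pl x y \<in> I"
  using subgroup.m_closed[OF ideal_sub] by (simp add: add_grp_def)

lemma ideal_zero: "is_ideal I \<Longrightarrow> asym_zero \<in> I"
  using subgroup.one_closed[OF ideal_sub] by (simp add: add_grp_def)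

lemma ideal_cancel: assumes "is_ideal I" "u \<in> I" "v \<in> A" "pl v u \<in> I" shows "v \<in> I"
proof -
  have sg: "subgroup I (add_grp A pl asym_zero)" using ideal_sub assms(1) .
  have "v \<in> carrier (add_grp A pl asym_zero)" "v \<otimes>\<^bsub>add_grp A pl asym_zero\<^esub> u \<in> I"
    using assms(3,4) by (simp_all add: add_grp_def)
  then show ?thesis using group.subgroup_cancel[OF add_group sg assms(2)] by blast
qed

lemma ideal_lambda: "is_ideal I \<Longrightarrow> a \<in> A \<Longrightarrow> x \<in> I \<Longrightarrow> brace_lambda A pl asym_zero tm a x \<in> I"
  by (simp add: is_ideal_def brace_ideal_def brace_left_ideal_def)

lemma ideal_conj: assumes "is_ideal I" "g \<in> A" "h \<in> I" "h' \<in> A" "tm g h' = tm h g"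
  shows "h' \<in> I"
proof -
  obtain e where e: "group (mul_grp A tm e)" "I \<lhd> mul_grp A tm e"
    using assms(1) by (auto simp: is_ideal_def brace_ideal_def)
  have c: "g \<in> carrier (mul_grp A tm e)" "h' \<in> carrier (mul_grp A tm e)"
    "g \<otimes>\<^bsub>mul_grp A tm e\<^esub> h' = h \<otimes>\<^bsub>mul_grp A tm e\<^esub> g"
    using assms(2,4,5) by (simp_all add: mul_grp_def)
  show ?thesis by (rule group.conj_left[OF e(1) e(2) c(1) assms(3) c(2,3)])
qed

lemma K1: assumes I: "is_ideal I" and xy: "(x, y) \<in> I" and t: "t \<in> T"
  shows "((\<lambda>_ _ _. 0), B x t) \<in> I"
proof -
  have xyA: "(x, y) \<in> A" using xy ideal_subset I by blast
  then have xT: "x \<in> T" and yS: "y \<in> S" by (auto simp: A_mem)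
  have tA: "(t, (\<lambda>_ _. 0)) \<in> A" using t zeroS by (simp add: A_mem)
  have "brace_lambda A pl asym_zero tm (t, (\<lambda>_ _. 0)) (x, y) \<in> I"
    using ideal_lambda[OF I tA xy] .
  then have u: "(x, sadd n p y (sneg (B x t))) \<in> I"
    using lambda_eq[OF tA xyA] xT by (simp add: alpha_zero_s)
  have vA: "((\<lambda>_ _ _. 0), B x t) \<in> A" using xT t by (simp add: A_mem zeroT bT_in)
  have "sadd n p (sadd n p (B x t) (sadd n p y (sneg (B x t)))) (B (\<lambda>_ _ _. 0) x) = y"
    using yS xT by (intro ext) (auto simp: sadd_def sneg_def bT_zero_l mod_simps S_mod S_out)
  then have "pl ((\<lambda>_ _ _. 0), B x t) (x, sadd n p y (sneg (B x t))) = (x, y)"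
    using xT by (simp add: asym_add_def tadd_zero_l)
  then show ?thesis using ideal_cancel[OF I u vA] xy by simp
qed

lemma K2: assumes I: "is_ideal I" and h: "((\<lambda>_ _ _. 0), s0) \<in> I" and u: "u \<in> T"
  shows "(tadd n p (tneg u) (al s0 u), (\<lambda>_ _. 0)) \<in> I"
proof -
  have "((\<lambda>_ _ _. 0), s0) \<in> A" using h ideal_subset[OF I] by blast
  then have s0: "s0 \<in> S" by (simp add: A_mem)
  define D where "D = tadd n p (tneg u) (al s0 u)"
  have DT: "D \<in> T" using u by (simp add: D_def tadd_in tneg_in alpha_in)
  have gA: "(u, (\<lambda>_ _. 0)) \<in> A" using u zeroS by (simp add: A_mem)
  have hA: "(D, s0) \<in> A" using DT s0 by (simp add: A_mem)
  have "tadd n p u D = al s0 u"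
    unfolding D_def using alpha_in[OF u, of s0]
    by (intro ext) (auto simp: tadd_def tneg_def mod_simps T_mod T_out)
  then have "tm (u, (\<lambda>_ _. 0)) (D, s0) = tm ((\<lambda>_ _ _. 0), s0) (u, (\<lambda>_ _. 0))"
    using DT s0 u alpha_in[OF u, of s0] by (simp add: asym_mul_def alpha_zero_s tadd_zero_l sadd_zero_l sadd_zero_r)
  then have Ds: "(D, s0) \<in> I" using ideal_conj[OF I gA h hA] by simp
  have vA: "(D, (\<lambda>_ _. 0)) \<in> A" using DT zeroS by (simp add: A_mem)
  have "tadd n p D (\<lambda>_ _ _. 0) = D" using tadd_zero_l[OF DT] tadd_comm by metis
  then have "pl (D, (\<lambda>_ _. 0)) ((\<lambda>_ _ _. 0), s0) = (D, s0)"
    using DT s0 by (simp add: asym_add_def sadd_zero_l sadd_zero_r bT_zero_r)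
  then show ?thesis using ideal_cancel[OF I h vA] Ds by (simp add: D_def)
qed

lemma K3: assumes I: "is_ideal I" and h: "((\<lambda>_ _ _. 0), s) \<in> I"
  shows "((\<lambda>_ _ _. 0), smul k s) \<in> I"
proof (induction k)
  case 0
  have "smul 0 s = (\<lambda>_ _. 0)" by (simp add: smul_def fun_eq_iff)
  then show ?case using ideal_zero[OF I] by (simp add: asym_zero_def)
next
  case (Suc k)
  have "sadd n p (sadd n p (smul k s) s) (B (\<lambda>_ _ _. 0) (\<lambda>_ _ _. 0)) = smul (Suc k) s"
    by (intro ext) (simp add: sadd_def smul_def bT_zero_l zeroT mod_simps algebra_simps)
  then have "pl ((\<lambda>_ _ _. 0), smul k s) ((\<lambda>_ _ _. 0), s) = ((\<lambda>_ _ _. 0), smul (Suc k) s)"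
    by (simp add: asym_add_def tadd_zero_l zeroT)
  then show ?case using ideal_pl[OF I Suc h] by simp
qed

end

context setting begin

lemma V_nontriv: assumes "z < n" shows "\<exists>w\<in>V z. w \<noteq> (\<lambda>_. 0)"
proof -
  have "perm_order (V z) (f z) (p (cpred n z))" using f_order assms by blast
  moreover have "1 < p (cpred n z)" using p_gt1 cpred_lt by blast
  ultimately obtain v where v: "v \<in> V z" "(f z ^^ 1) v \<noteq> v" unfolding perm_order_def by blast
  then have "v \<noteq> (\<lambda>_. 0)" using f_zero[OF assms] by auto
  then show ?thesis using v by blast
qed

lemma sum_single: assumes "j < (M::nat)" shows "(\<Sum>j'<M. if j' = j then (c::int) else 0) = c"
  using assms by (simp add: sum.delta)

lemma expo_smul: assumes "s \<in> S" "z < n"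
  shows "expo (smul k s) z j mod p (cpred n z) = (k * expo s z j) mod p (cpred n z)"
proof -
  let ?c = "cpred n z" let ?R = "r ?c - 1"
  have c: "?c < n" by (rule cpred_lt)
  have nn: "\<And>i. 0 \<le> s ?c i" using S_nonneg assms c by auto
  have sm: "\<And>i. smul k s ?c i = (int k * s ?c i) mod int (p ?c)" using c by (simp add: smul_def)
  have nn2: "\<And>i. 0 \<le> (int k * s ?c i) mod int (p ?c)" using q_pos by simp
  have "int (expo (smul k s) z j) mod int (p ?c) = int (k * expo s z j) mod int (p ?c)"
  proof (cases "j + 1 < r ?c")
    case True
    have e1: "int (k * expo s z j) = int k * (s ?c j + s ?c ?R)"
      using True nn by (simp add: expo_def)
    have e2: "int (expo (smul k s) z j) = (int k * s ?c j) mod int (p ?c) + (int k * s ?c ?R) mod int (p ?c)"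
      using True nn2 by (simp add: expo_def sm)
    show ?thesis unfolding e1 e2 by (simp add: mod_add_eq distrib_left)
  next
    case False
    have e1: "int (k * expo s z j) = int k * s ?c ?R"
      using False nn by (simp add: expo_def)
    have e2: "int (expo (smul k s) z j) = (int k * s ?c ?R) mod int (p ?c)"
      using False nn2 by (simp add: expo_def sm)
    show ?thesis unfolding e1 e2 by simp
  qed
  then have "int (expo (smul k s) z j mod p ?c) = int (k * expo s z j mod p ?c)"
    by (simp add: zmod_int)
  then show ?thesis by linarith
qed


lemma cpred_suc: "cpred n (Suc a mod n) = a mod n"
proof -
  have n0: "0 < n" using n_gt by simp
  have "Suc a mod n + n - 1 = Suc a mod n + (n - 1)" using n0 by simp
  then have "cpred n (Suc a mod n) = (Suc a mod n + (n - 1)) mod n" by (simp add: cpred_def)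
  also have "\<dots> = (Suc a + (n - 1)) mod n" by (simp add: mod_add_left_eq)
  also have "Suc a + (n - 1) = a + n" using n0 by simp
  finally show ?thesis by simp
qed

definition Qp where "Qp I z \<longleftrightarrow> (\<exists>s. ((\<lambda>_ _ _. 0), s) \<in> I \<and> s z (r z - 1) \<noteq> 0)"
definition Pp where "Pp I z \<longleftrightarrow> (\<exists>c. 0 < c \<and> c < int (p z) \<and> ((\<lambda>_ _ _. 0), Se z (r z - 1) c) \<in> I)"

lemma ideal_S: "is_ideal I \<Longrightarrow> (t, s) \<in> I \<Longrightarrow> s \<in> S"
  using ideal_subset by (force simp: A_mem)

lemma ideal_T: "is_ideal I \<Longrightarrow> (t, s) \<in> I \<Longrightarrow> t \<in> T"
  using ideal_subset by (force simp: A_mem)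

lemma r_R: "z < n \<Longrightarrow> r z - 1 + 1 = r z"
  using r_pos by simp

lemma K6: assumes I: "is_ideal I" and zz: "zz < n" and j: "j < m zz"
  and all: "\<forall>w\<in>V zz. (Tv zz j w, (\<lambda>_ _. 0)) \<in> I"
  shows "Qp I zz"
proof -
  obtain w0 where w0: "w0 \<in> V zz" "w0 \<noteq> (\<lambda>_. 0)" using V_nontriv zz by blast
  obtain w' where w': "w' \<in> V zz" "b zz w0 w' \<noteq> 0" using b_nonsing zz w0 by blast
  have "((\<lambda>_ _ _. 0), B (Tv zz j w0) (Tv zz j w')) \<in> I"
    using K1[OF I all[rule_format, OF w0(1)] Tv_in[OF zz j w'(1)]] .
  moreover have "B (Tv zz j w0) (Tv zz j w') zz (r zz - 1) = b zz w0 w'"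
  proof -
    have "(\<Sum>j'<m zz. b zz (Tv zz j w0 zz j') (Tv zz j w' zz j')) = (\<Sum>j'<m zz. if j' = j then b zz w0 w' else 0)"
      by (intro sum.cong) (auto simp: Tv_def b_zero_l zz Zp_zero p_pos)
    also have "\<dots> = b zz w0 w'" using j by (rule sum_single)
    finally show ?thesis using zz r_R[OF zz] w0 w' by (simp add: bT_eq b_mod)
  qed
  ultimately show ?thesis using w' unfolding Qp_def by auto
qed

lemma K8: assumes I: "is_ideal I" and zz: "zz < n"
  and all: "\<forall>w\<in>V zz. (Tv zz (m zz - 1) w, (\<lambda>_ _. 0)) \<in> I"
  shows "Pp I zz"
proof -
  let ?M = "m zz - 1"
  have rm: "r zz \<le> m zz" "0 < r zz" using m_ge r_pos zz by auto
  then have M: "?M < m zz" by simp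
  obtain w0 where w0: "w0 \<in> V zz" "w0 \<noteq> (\<lambda>_. 0)" using V_nontriv zz by blast
  obtain w' where w': "w' \<in> V zz" "b zz w0 w' \<noteq> 0" using b_nonsing zz w0 by blast
  have K: "((\<lambda>_ _ _. 0), B (Tv zz ?M w0) (Tv zz ?M w')) \<in> I"
    using K1[OF I all[rule_format, OF w0(1)] Tv_in[OF zz M w'(1)]] .
  have "B (Tv zz ?M w0) (Tv zz ?M w') = Se zz (r zz - 1) (b zz w0 w')"
  proof (intro ext)
    fix z' i
    show "B (Tv zz ?M w0) (Tv zz ?M w') z' i = Se zz (r zz - 1) (b zz w0 w') z' i"
    proof (cases "z' < n")
      case z': True
      show ?thesis
      proof (cases "z' = zz")
        case True
        have s1: "(\<Sum>j'<m zz. b zz (Tv zz ?M w0 zz j') (Tv zz ?M w' zz j')) = (\<Sum>j'<m zz. if j' = ?M then b zz w0 w' else 0)"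
          by (intro sum.cong) (auto simp: Tv_def b_zero_l zz Zp_zero p_pos)
        have s2: "(\<Sum>j'<m zz. if j' = ?M then b zz w0 w' else 0) = b zz w0 w'" using M by (rule sum_single)
        have "i + 1 < r zz \<Longrightarrow> i \<noteq> ?M" using rm by linarith
        then show ?thesis using True zz s1 s2 w0 w' rm
          by (auto simp: bT_eq Se_def Tv_def b_mod b_zero_l Zp_zero p_pos)
      next
        case False
        have "(\<Sum>j'<m z'. b z' (Tv zz ?M w0 z' j') (Tv zz ?M w' z' j')) = 0"
          using False by (simp add: Tv_def b_zero_l z' Zp_zero p_pos)
        then show ?thesis using False z' by (simp add: bT_eq Se_def Tv_def b_zero_l Zp_zero p_pos)
      qed
    next
      case False
      then show ?thesis using zz by (auto simp: bT_eq Se_def)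
    qed
  qed
  moreover have "0 < b zz w0 w'" "b zz w0 w' < int (p zz)" using b_range[OF zz w0(1) w'(1)] w'(2) by auto
  ultimately show ?thesis using K unfolding Pp_def by auto
qed

end

locale setting_bij = setting +
  assumes bijf: "\<forall>z<n. bij_betw (\<lambda>v. vsub (p z) (f z v) v) (V z) (V z)"
begin

lemma K5: assumes I: "is_ideal I" and h: "((\<lambda>_ _ _. 0), s) \<in> I" and zz: "zz < n" and j: "j < m zz"
  and e: "expo s zz j mod p (cpred n zz) \<noteq> 0" and w: "w \<in> V zz"
  shows "(Tv zz j w, (\<lambda>_ _. 0)) \<in> I"
proof -
  let ?c = "cpred n zz"
  have c: "?c < n" by (rule cpred_lt)
  have sS: "s \<in> S" using ideal_S[OF I h] .
  have "int (expo s zz j mod p ?c) = int (expo s zz j) mod int (p ?c)" by (rule of_nat_mod)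
  then have "int (expo s zz j) mod int (p ?c) \<noteq> 0" using e by linarith
  then obtain k where k: "(int k * int (expo s zz j)) mod int (p ?c) = 1"
    using inv_mod p_prime c by blast
  define s' where "s' = smul k s"
  have h': "((\<lambda>_ _ _. 0), s') \<in> I" using K3[OF I h] by (simp add: s'_def)
  have "int ((k * expo s zz j) mod p ?c) = 1" using k by (simp add: of_nat_mod)
  then have "(k * expo s zz j) mod p ?c = 1" by linarith
  then have e': "expo s' zz j mod p ?c = 1 mod p ?c"
    using expo_smul[OF sS zz, of k j] p_gt1[OF c] by (simp add: s'_def)
  have "w \<in> (\<lambda>v. vsub (p zz) (f zz v) v) ` V zz" using bijf zz w by (simp add: bij_betw_def)
  then obtain u0 where u0: "u0 \<in> V zz" "w = vsub (p zz) (f zz u0) u0" by blast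
  define u where "u = Tv zz j u0"
  have uT: "u \<in> T" using Tv_in[OF zz j u0(1)] by (simp add: u_def)
  have K: "(tadd n p (tneg u) (al s' u), (\<lambda>_ _. 0)) \<in> I" using K2[OF I h' uT] .
  have fe: "(f zz ^^ expo s' zz j) u0 = f zz u0"
    using fpow_cong[OF zz u0(1) e'] by simp
  have eq: "tadd n p (tneg u) (al s' u) = Tv zz j w"
  proof (intro ext)
    fix z' j' i
    show "tadd n p (tneg u) (al s' u) z' j' i = Tv zz j w z' j' i"
    proof (cases "z' = zz \<and> j' = j")
      case True
      have a: "al s' u zz j = f zz u0" using zz j fe by (simp add: alpha_eq u_def Tv_def)
      have t: "tneg u zz j i = (- u0 i) mod int (p zz)" using zz by (simp add: tneg_def u_def Tv_def)
      have "tadd n p (tneg u) (al s' u) zz j i = ((- u0 i) mod int (p zz) + f zz u0 i) mod int (p zz)"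
        using zz a t by (simp add: tadd_def)
      also have "\<dots> = w i" using u0(2) by (simp add: vsub_def mod_simps)
      finally show ?thesis using True by (simp add: Tv_def)
    next
      case False
      then have u0': "u z' j' = (\<lambda>_. 0)" by (auto simp: u_def Tv_def)
      have a0: "al s' u z' j' = (\<lambda>_. 0)"
      proof (cases "z' < n \<and> j' < m z'")
        case True
        then have "al s' u z' j' = (f z' ^^ expo s' z' j') (\<lambda>_. 0)" using u0' by (simp add: alpha_eq)
        then show ?thesis using fpow_zero True by simp
      qed (auto simp: alpha_eq)
      have t0: "tneg u z' j' i = 0" using u0' by (simp add: tneg_def)
      have "tadd n p (tneg u) (al s' u) z' j' i = 0" using a0 t0 by (simp add: tadd_def)
      then show ?thesis using False by (auto simp: Tv_def)
    qed
  qed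
  show ?thesis using K eq by simp
qed

end

context setting begin

lemma B_Tv: assumes z: "z < n" and j: "j < m z" and w: "w \<in> V z" "w' \<in> V z"
  shows "B (Tv z j w) (Tv z j w') = (\<lambda>z' i. if z' = z \<and> (i = j \<and> i + 1 < r z \<or> i + 1 = r z) then b z w w' else 0)"
proof (intro ext)
  fix z' i
  show "B (Tv z j w) (Tv z j w') z' i = (if z' = z \<and> (i = j \<and> i + 1 < r z \<or> i + 1 = r z) then b z w w' else 0)"
  proof (cases "z' < n")
    case z': True
    show ?thesis
    proof (cases "z' = z")
      case True
      have s1: "(\<Sum>j'<m z. b z (Tv z j w z j') (Tv z j w' z j')) = (\<Sum>j'<m z. if j' = j then b z w w' else 0)"
        by (intro sum.cong) (auto simp: Tv_def b_zero_l z Zp_zero p_pos)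
      have s2: "(\<Sum>j'<m z. if j' = j then b z w w' else 0) = b z w w'" using j by (rule sum_single)
      show ?thesis using True z s1 s2 w
        by (auto simp: bT_eq Tv_def b_mod b_zero_l Zp_zero p_pos)
    next
      case False
      have "(\<Sum>j'<m z'. b z' (Tv z j w z' j') (Tv z j w' z' j')) = 0"
        using False by (simp add: Tv_def b_zero_l z' Zp_zero p_pos)
      then show ?thesis using False z' by (simp add: bT_eq Tv_def b_zero_l Zp_zero p_pos)
    qed
  next
    case False
    then show ?thesis using z by (auto simp: bT_eq)
  qed
qed

lemma B_disj: assumes "t \<in> T" "t' \<in> T" "\<forall>z j. t z j = (\<lambda>_. 0) \<or> t' z j = (\<lambda>_. 0)"
  shows "B t t' = (\<lambda>_ _. 0)"
proof (intro ext)
  fix z i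
  show "B t t' z i = 0"
  proof (cases "z < n")
    case z: True
    have bz: "\<And>j. b z (t z j) (t' z j) = 0"
    proof -
      fix j
      have "t z j \<in> V z" "t' z j \<in> V z" using assms T_inV z by auto
      then show "b z (t z j) (t' z j) = 0" using assms(3) b_zero_l b_zero_r z by metis
    qed
    show ?thesis using z by (simp add: bT_eq bz)
  qed (simp add: bT_eq)
qed

lemma P_Q: "Pp I z \<Longrightarrow> Qp I z"
  unfolding Pp_def Qp_def by (force simp: Se_def)

end

context setting_bij begin

lemma Q_step: assumes I: "is_ideal I" and zz: "zz < n" and Q: "Qp I (cpred n zz)" shows "Pp I zz"
proof -
  let ?c = "cpred n zz" let ?M = "m zz - 1" let ?R = "r ?c - 1"
  obtain s where s: "((\<lambda>_ _ _. 0), s) \<in> I" "s ?c ?R \<noteq> 0" using Q unfolding Qp_def by blast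
  have sS: "s \<in> S" using ideal_S[OF I s(1)] .
  have c: "?c < n" by (rule cpred_lt)
  have rm: "r zz \<le> m zz" "0 < r zz" "r ?c \<le> m zz" "0 < r ?c" using m_ge r_pos zz c by auto
  have M: "?M < m zz" using rm by simp
  have nl: "\<not> (?M + 1 < r ?c)" using rm by linarith
  have ex: "expo s zz ?M = nat (s ?c ?R)" using nl by (simp add: expo_def)
  have "s ?c \<in> Zp_space (p ?c) (r ?c)" using S_in sS c by blast
  then have bnd: "0 \<le> s ?c ?R" "s ?c ?R < int (p ?c)" using rm(4) by (auto simp: Zp_space_def)
  have "nat (s ?c ?R) < p ?c" using bnd by linarith
  then have "expo s zz ?M mod p ?c \<noteq> 0" using ex s(2) bnd by simp
  then have all: "\<forall>w\<in>V zz. (Tv zz ?M w, (\<lambda>_ _. 0)) \<in> I"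
    using K5[OF I s(1) zz M] by blast
  show ?thesis using K8[OF I zz all] .
qed

lemma Q_all: assumes I: "is_ideal I" and z0: "z0 < n" and Q: "Qp I z0" and z: "z < n" shows "Qp I z"
proof -
  have n0: "0 < n" using n_gt by simp
  have "Qp I ((z0 + k) mod n)" for k
  proof (induction k)
    case 0 then show ?case using z0 Q by simp
  next
    case (Suc k)
    have e: "(z0 + Suc k) mod n = Suc (z0 + k) mod n" by simp
    have "cpred n (Suc (z0 + k) mod n) = (z0 + k) mod n" by (rule cpred_suc)
    then show ?case unfolding e using Q_step[OF I _ ] P_Q Suc n0 by (metis mod_less_divisor)
  qed
  from this[of "z + n - z0"] show ?thesis using z z0 by simp
qed

lemma base: assumes I: "is_ideal I" and ne: "I \<noteq> {asym_zero}" shows "\<exists>z<n. Qp I z"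
proof -
  obtain e where e: "e \<in> I" "e \<noteq> asym_zero" using ne ideal_zero[OF I] by blast
  obtain x y where xy: "e = (x, y)" by (cases e)
  have xT: "x \<in> T" and yS: "y \<in> S" using ideal_T[OF I] ideal_S[OF I] e(1) xy by auto
  show ?thesis
  proof (cases "x = (\<lambda>_ _ _. 0)")
    case False
    then obtain z j where zj: "x z j \<noteq> (\<lambda>_. 0)" by (metis ext)
    then have zjb: "z < n" "j < m z" using T_out xT by blast+
    have xv: "x z j \<in> V z" using T_in xT zjb by blast
    obtain w' where w': "w' \<in> V z" "b z (x z j) w' \<noteq> 0" using b_nonsing zjb(1) xv zj by blast
    have K: "((\<lambda>_ _ _. 0), B x (Tv z j w')) \<in> I" using K1[OF I _ Tv_in[OF zjb w'(1)]] e(1) xy by simp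
    have s1: "(\<Sum>j'<m z. b z (x z j') (Tv z j w' z j')) = (\<Sum>j'<m z. if j' = j then b z (x z j) w' else 0)"
      using xT zjb by (intro sum.cong) (auto simp: Tv_def b_zero_r T_inV)
    have s2: "(\<Sum>j'<m z. if j' = j then b z (x z j) w' else 0) = b z (x z j) w'" using zjb by (intro sum_single)
    have "B x (Tv z j w') z (r z - 1) = b z (x z j) w'"
      using zjb r_R[OF zjb(1)] s1 s2 xv w' by (simp add: bT_eq b_mod)
    then have "Qp I z" using K w' unfolding Qp_def by auto
    then show ?thesis using zjb by blast
  next
    case True
    then have "y \<noteq> (\<lambda>_ _. 0)" using e xy by (auto simp: asym_zero_def)
    then obtain z i where zi: "y z i \<noteq> 0" by (metis ext)
    have z: "z < n" using zi S_out yS by (metis)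
    have yz: "y z \<in> Zp_space (p z) (r z)" using S_in yS z by blast
    have i: "i < r z" using zi yz by (metis Zp_out not_le)
    have h: "((\<lambda>_ _ _. 0), y) \<in> I" using e(1) xy True by simp
    show ?thesis
    proof (cases "y z (r z - 1) = 0")
      case False
      then show ?thesis using h z unfolding Qp_def by blast
    next
      case R0: True
      have iR: "i + 1 < r z" using i R0 zi by (metis Suc_eq_plus1 Suc_lessI diff_Suc_1)
      define zz where "zz = Suc z mod n"
      have zz: "zz < n" using n_gt by (simp add: zz_def)
      have c: "cpred n zz = z" using cpred_suc[of z] z by (simp add: zz_def)
      have jm: "i < m zz" using m_ge zz c i by (metis order.strict_trans2)
      have bnd: "0 \<le> y z i" "y z i < int (p z)" using yz i by (auto simp: Zp_space_def)
      have ex: "expo y zz i = nat (y z i)" using iR c R0 by (simp add: expo_def)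
      have "nat (y z i) < p z" using bnd by linarith
      then have "expo y zz i mod p (cpred n zz) \<noteq> 0" using ex c zi bnd by simp
      then have "\<forall>w\<in>V zz. (Tv zz i w, (\<lambda>_ _. 0)) \<in> I" using K5[OF I h zz jm] by blast
      then have "Qp I zz" using K6[OF I zz jm] by blast
      then show ?thesis using zz by blast
    qed
  qed
qed

end

context setting_bij begin

lemma all_P: assumes I: "is_ideal I" and ne: "I \<noteq> {asym_zero}" and z: "z < n" shows "Pp I z"
proof -
  obtain z0 where z0: "z0 < n" "Qp I z0" using base[OF I ne] by blast
  have "Qp I (cpred n z)" using Q_all[OF I z0 cpred_lt] .
  then show ?thesis using Q_step[OF I z] by blast
qed

lemma all_Tv: assumes I: "is_ideal I" and ne: "I \<noteq> {asym_zero}" and z: "z < n" and j: "j < m z" and w: "w \<in> V z"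
  shows "(Tv z j w, (\<lambda>_ _. 0)) \<in> I"
proof -
  let ?c = "cpred n z" let ?R = "r ?c - 1"
  have c: "?c < n" by (rule cpred_lt)
  obtain cc where cc: "0 < cc" "cc < int (p ?c)" "((\<lambda>_ _ _. 0), Se ?c ?R cc) \<in> I"
    using all_P[OF I ne c] unfolding Pp_def by blast
  have "expo (Se ?c ?R cc) z j = nat cc"
    by (auto simp: expo_def Se_def)
  moreover have "nat cc < p ?c" using cc by linarith
  ultimately have "expo (Se ?c ?R cc) z j mod p ?c \<noteq> 0" using cc by simp
  then show ?thesis using K5[OF I cc(3) z j _ w] by blast
qed

lemma Se_scale: assumes I: "is_ideal I" and z: "z < n" and h: "((\<lambda>_ _ _. 0), Se z i c0) \<in> I"
  and c0: "0 < c0" "c0 < int (p z)" and c: "0 \<le> c" "c < int (p z)"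
  shows "((\<lambda>_ _ _. 0), Se z i c) \<in> I"
proof -
  have "c0 mod int (p z) \<noteq> 0" using c0 by simp
  then obtain k0 where k0: "(int k0 * c0) mod int (p z) = 1" using inv_mod p_prime z by blast
  define k where "k = k0 * nat c"
  have "(int k * c0) mod int (p z) = (c * ((int k0 * c0) mod int (p z))) mod int (p z)"
    using c by (simp add: k_def mod_simps algebra_simps)
  also have "\<dots> = c" using k0 c by simp
  finally have kc: "(int k * c0) mod int (p z) = c" .
  have "smul k (Se z i c0) = Se z i c"
    by (intro ext) (auto simp: smul_def Se_def kc z)
  then show ?thesis using K3[OF I h, of k] by simp
qed

lemma all_Se: assumes I: "is_ideal I" and ne: "I \<noteq> {asym_zero}" and z: "z < n" and i: "i < r z"
  and c: "0 \<le> c" "c < int (p z)"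
  shows "((\<lambda>_ _ _. 0), Se z i c) \<in> I"
proof -
  let ?R = "r z - 1"
  obtain c0 where c0: "0 < c0" "c0 < int (p z)" "((\<lambda>_ _ _. 0), Se z ?R c0) \<in> I"
    using all_P[OF I ne z] unfolding Pp_def by blast
  show ?thesis
  proof (cases "i = ?R")
    case True
    then show ?thesis using Se_scale[OF I z c0(3) c0(1,2) c] by simp
  next
    case False
    then have iR: "i + 1 < r z" using i by linarith
    have rm: "r z \<le> m z" using m_ge z by blast
    have im: "i < m z" using i rm by linarith
    obtain w0 where w0: "w0 \<in> V z" "w0 \<noteq> (\<lambda>_. 0)" using V_nontriv z by blast
    obtain w' where w': "w' \<in> V z" "b z w0 w' \<noteq> 0" using b_nonsing z w0 by blast
    define b0 where "b0 = b z w0 w'"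
    have b0: "0 < b0" "b0 < int (p z)" using b_range[OF z w0(1) w'(1)] w'(2) by (auto simp: b0_def)
    have K: "((\<lambda>_ _ _. 0), B (Tv z i w0) (Tv z i w')) \<in> I"
      using K1[OF I all_Tv[OF I ne z im w0(1)] Tv_in[OF z im w'(1)]] .
    have u: "((\<lambda>_ _ _. 0), Se z ?R b0) \<in> I" using Se_scale[OF I z c0(3) c0(1,2)] b0 by simp
    have vA: "((\<lambda>_ _ _. 0), Se z i b0) \<in> A" using Se_in[OF z i] b0 zeroT by (simp add: A_mem)
    have "sadd n p (sadd n p (Se z i b0) (Se z ?R b0)) (B (\<lambda>_ _ _. 0) (\<lambda>_ _ _. 0)) = B (Tv z i w0) (Tv z i w')"
      unfolding B_Tv[OF z im w0(1) w'(1)]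
      using b0 iR z by (intro ext) (auto simp: sadd_def Se_def bT_zero_l zeroT b0_def)
    then have "pl ((\<lambda>_ _ _. 0), Se z i b0) ((\<lambda>_ _ _. 0), Se z ?R b0) = ((\<lambda>_ _ _. 0), B (Tv z i w0) (Tv z i w'))"
      by (simp add: asym_add_def tadd_zero_l zeroT)
    then have "((\<lambda>_ _ _. 0), Se z i b0) \<in> I" using ideal_cancel[OF I u vA] K by simp
    then show ?thesis using Se_scale[OF I z _ b0 c] by simp
  qed
qed

end

context setting_bij begin

lemma S_sum: assumes I: "is_ideal I" and ne: "I \<noteq> {asym_zero}" and s: "s \<in> S"
  and F: "finite F" "F \<subseteq> {(z, i). z < n \<and> i < r z}"
  shows "((\<lambda>_ _ _. 0), (\<lambda>z i. if (z, i) \<in> F then s z i else 0)) \<in> I"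
  using F
proof (induction F rule: finite_induct)
  case empty
  then show ?case using ideal_zero[OF I] by (simp add: asym_zero_def)
next
  case (insert x F)
  obtain z i where x: "x = (z, i)" by (cases x)
  have zi: "z < n" "i < r z" using insert x by auto
  have sz: "s z \<in> Zp_space (p z) (r z)" using S_in s zi by blast
  then have sb: "0 \<le> s z i" "s z i < int (p z)" using zi by (auto simp: Zp_space_def)
  have IH: "((\<lambda>_ _ _. 0), (\<lambda>z i. if (z, i) \<in> F then s z i else 0)) \<in> I" using insert by blast
  have Se: "((\<lambda>_ _ _. 0), Se z i (s z i)) \<in> I" using all_Se[OF I ne zi sb] .
  have "sadd n p (sadd n p (\<lambda>z i. if (z, i) \<in> F then s z i else 0) (Se z i (s z i))) (B (\<lambda>_ _ _. 0) (\<lambda>_ _ _. 0))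
     = (\<lambda>z' i'. if (z', i') \<in> insert x F then s z' i' else 0)"
  proof (intro ext)
    fix z' i'
    show "sadd n p (sadd n p (\<lambda>z i. if (z, i) \<in> F then s z i else 0) (Se z i (s z i))) (B (\<lambda>_ _ _. 0) (\<lambda>_ _ _. 0)) z' i'
     = (if (z', i') \<in> insert x F then s z' i' else 0)"
      using insert(2,4) x zi by (auto simp: sadd_def Se_def bT_zero_l zeroT S_mod s)
  qed
  then have "pl ((\<lambda>_ _ _. 0), (\<lambda>z i. if (z, i) \<in> F then s z i else 0)) ((\<lambda>_ _ _. 0), Se z i (s z i))
      = ((\<lambda>_ _ _. 0), (\<lambda>z' i'. if (z', i') \<in> insert x F then s z' i' else 0))"
    by (simp add: asym_add_def tadd_zero_l zeroT)
  then show ?case using ideal_pl[OF I IH Se] by simp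
qed

lemma T_sum: assumes I: "is_ideal I" and ne: "I \<noteq> {asym_zero}" and t: "t \<in> T"
  and F: "finite F" "F \<subseteq> {(z, j). z < n \<and> j < m z}"
  shows "((\<lambda>z j. if (z, j) \<in> F then t z j else (\<lambda>_. 0)), (\<lambda>_ _. 0)) \<in> I"
  using F
proof (induction F rule: finite_induct)
  case empty
  then show ?case using ideal_zero[OF I] by (simp add: asym_zero_def)
next
  case (insert x F)
  obtain z j where x: "x = (z, j)" by (cases x)
  have zj: "z < n" "j < m z" using insert x by auto
  have tv: "t z j \<in> V z" using T_in t zj by blast
  let ?tF = "\<lambda>z j. if (z, j) \<in> F then t z j else (\<lambda>_. 0)"
  have IH: "(?tF, (\<lambda>_ _. 0)) \<in> I" using insert by blast
  have tFT: "?tF \<in> T" using t insert(4) by (auto simp: T_mem Zp_zero p_pos T_in)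
  have Tv: "(Tv z j (t z j), (\<lambda>_ _. 0)) \<in> I" using all_Tv[OF I ne zj tv] .
  have dj: "\<forall>z' j'. ?tF z' j' = (\<lambda>_. 0) \<or> Tv z j (t z j) z' j' = (\<lambda>_. 0)"
    using insert(2) x by (auto simp: Tv_def)
  have B0: "B ?tF (Tv z j (t z j)) = (\<lambda>_ _. 0)" using B_disj[OF tFT Tv_in[OF zj tv] dj] .
  have "tadd n p ?tF (Tv z j (t z j)) = (\<lambda>z' j'. if (z', j') \<in> insert x F then t z' j' else (\<lambda>_. 0))"
  proof (intro ext)
    fix z' j' i
    show "tadd n p ?tF (Tv z j (t z j)) z' j' i = (if (z', j') \<in> insert x F then t z' j' else (\<lambda>_. 0)) i"
      using insert(2,4) x zj by (auto simp: tadd_def Tv_def T_mod t)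
  qed
  then have "pl (?tF, (\<lambda>_ _. 0)) (Tv z j (t z j), (\<lambda>_ _. 0))
      = ((\<lambda>z' j'. if (z', j') \<in> insert x F then t z' j' else (\<lambda>_. 0)), (\<lambda>_ _. 0))"
    using B0 by (simp add: asym_add_def sadd_zero_l zeroS)
  then show ?case using ideal_pl[OF I IH Tv] by simp
qed

lemma ideal_full: assumes I: "is_ideal I" and ne: "I \<noteq> {asym_zero}" shows "I = A"
proof
  show "I \<subseteq> A" using ideal_subset[OF I] .
next
  show "A \<subseteq> I"
  proof
    fix x assume x: "x \<in> A"
    obtain t s where ts: "x = (t, s)" by (cases x)
    have t: "t \<in> T" and s: "s \<in> S" using x ts by (auto simp: A_mem)
    have fS: "finite (Sigma {..<n} (\<lambda>z. {..<r z}))" by simp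
    have sS: "Sigma {..<n} (\<lambda>z. {..<r z}) \<subseteq> {(z, i). z < n \<and> i < r z}" by auto
    have fT: "finite (Sigma {..<n} (\<lambda>z. {..<m z}))" by simp
    have sT: "Sigma {..<n} (\<lambda>z. {..<m z}) \<subseteq> {(z, j). z < n \<and> j < m z}" by auto
    have "(\<lambda>z i. if (z, i) \<in> Sigma {..<n} (\<lambda>z. {..<r z}) then s z i else 0) = s"
    proof (intro ext)
      fix z i
      show "(if (z, i) \<in> Sigma {..<n} (\<lambda>z. {..<r z}) then s z i else 0) = s z i"
      proof (cases "z < n")
        case True
        then have "s z \<in> Zp_space (p z) (r z)" using S_in s by blast
        then show ?thesis using True by (auto simp: Zp_space_def)
      next
        case False
        then show ?thesis using S_out[OF s False] by simp
      qed
    qed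
    then have h1: "((\<lambda>_ _ _. 0), s) \<in> I" using S_sum[OF I ne s fS sS] by simp
    have "(\<lambda>z j. if (z, j) \<in> Sigma {..<n} (\<lambda>z. {..<m z}) then t z j else (\<lambda>_. 0)) = t"
    proof (rule ext, rule ext)
      fix z j
      show "(if (z, j) \<in> Sigma {..<n} (\<lambda>z. {..<m z}) then t z j else (\<lambda>_. 0)) = t z j"
        using T_out[OF t, of z j] by auto
    qed
    then have h2: "(t, (\<lambda>_ _. 0)) \<in> I" using T_sum[OF I ne t fT sT] by simp
    have "pl (t, (\<lambda>_ _. 0)) ((\<lambda>_ _ _. 0), s) = (t, s)"
      using t s by (simp add: asym_add_def sadd_zero_l sadd_zero_r bT_zero_r tadd_comm[of t] tadd_zero_l)
    then show "x \<in> I" using ideal_pl[OF I h2 h1] ts by simp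
  qed
qed

lemma A_nontriv: "A \<noteq> {asym_zero}"
proof -
  have n0: "0 < n" using n_gt by simp
  have "Se 0 0 1 \<in> S" using Se_in[OF n0] r_pos p_gt1 n0 by simp
  then have "(\<lambda>_ _ _. 0, Se 0 0 1) \<in> A" using zeroT by (simp add: A_mem)
  moreover have "(\<lambda>_ _ _. 0, Se 0 0 1) \<noteq> asym_zero" by (auto simp: asym_zero_def Se_def fun_eq_iff)
  ultimately show ?thesis by blast
qed

lemma simple: "simple_left_brace A pl asym_zero tm"
  unfolding simple_left_brace_def
  using is_left_brace A_nontriv ideal_full by (auto simp: is_ideal_def)

end

context setting begin

context
  fixes z0 :: nat
  assumes z0: "z0 < n"
begin

abbreviation "gz \<equiv> (\<lambda>v. vsub (p z0) (f z0 v) v)"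
abbreviation "W \<equiv> gz ` V z0"

lemma P0: "0 < p z0" using p_pos z0 by blast

lemma W_sub: "W \<subseteq> V z0"
  using vsub_in[OF P0] f_in[OF z0] by blast

lemma W_zero: "(\<lambda>_. 0) \<in> W"
proof -
  have "gz (\<lambda>_. 0) = (\<lambda>_. 0)" using f_zero[OF z0] by (simp add: vsub_def)
  then show ?thesis using Zp_zero[OF P0] by force
qed

lemma W_add: assumes "a \<in> W" "c \<in> W" shows "vadd (p z0) a c \<in> W"
proof -
  obtain u v where uv: "u \<in> V z0" "v \<in> V z0" "a = gz u" "c = gz v" using assms by blast
  have "gz (vadd (p z0) u v) = vadd (p z0) a c"
    using uv f_add[OF z0 uv(1,2)] 
    apply (intro ext)
    apply (simp add: vadd_def vsub_def mod_simps)
    apply (simp add: algebra_simps)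
    done
  then show ?thesis using vadd_in[OF P0 uv(1,2)] by force
qed

lemma W_neg: assumes "a \<in> W" shows "vsub (p z0) (\<lambda>_. 0) a \<in> W"
proof -
  obtain u where u: "u \<in> V z0" "a = gz u" using assms by blast
  have fu: "f z0 (vsub (p z0) (\<lambda>_. 0) u) = vsub (p z0) (\<lambda>_. 0) (f z0 u)"
    using f_sub[OF z0 Zp_zero[OF P0] u(1)] f_zero[OF z0] by simp
  have "gz (vsub (p z0) (\<lambda>_. 0) u) = vsub (p z0) (\<lambda>_. 0) a"
    using u fu by (intro ext) (simp add: vsub_def mod_simps algebra_simps)
  then show ?thesis using vsub_in[OF P0 Zp_zero[OF P0] u(1)] by force
qed

lemma W_f: assumes "a \<in> W" shows "f z0 a \<in> W"
proof -
  obtain u where u: "u \<in> V z0" "a = gz u" using assms by blast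
  have "f z0 a = gz (f z0 u)" using f_sub[OF z0 f_in[OF z0 u(1)] u(1)] u by simp
  then show ?thesis using f_in[OF z0 u(1)] by blast
qed

lemma W_fpow: "a \<in> W \<Longrightarrow> (f z0 ^^ k) a \<in> W"
  by (induction k) (auto intro: W_f)

lemma W_diff: assumes v: "v \<in> V z0" shows "vsub (p z0) v ((f z0 ^^ k) v) \<in> W"
proof (induction k)
  case 0
  then show ?case using W_zero by (simp add: vsub_self)
next
  case (Suc k)
  let ?w = "(f z0 ^^ k) v"
  have w: "?w \<in> V z0" using fpow_in[OF z0 v] .
  have "vsub (p z0) ?w (f z0 ?w) = vsub (p z0) (\<lambda>_. 0) (gz ?w)"
    by (intro ext) (simp add: vsub_def mod_simps)
  then have 1: "vsub (p z0) ?w (f z0 ?w) \<in> W" using W_neg w by auto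
  have "vsub (p z0) v ((f z0 ^^ Suc k) v) = vadd (p z0) (vsub (p z0) v ?w) (vsub (p z0) ?w (f z0 ?w))"
    by (intro ext) (simp add: vsub_def vadd_def mod_simps)
  then show ?case using W_add[OF Suc 1] by simp
qed

definition Iw where "Iw = {x \<in> A. \<forall>j<m z0. fst x z0 j \<in> W}"

lemma Iw_sub: "Iw \<subseteq> A" by (auto simp: Iw_def)

lemma Iw_add_sub: "subgroup Iw (add_grp A pl asym_zero)"
proof (rule group.subgroupI[OF add_group])
  show "Iw \<subseteq> carrier (add_grp A pl asym_zero)" by (auto simp: Iw_def add_grp_def)
  have "asym_zero \<in> Iw" using zero_in W_zero by (simp add: Iw_def asym_zero_def)
  then show "Iw \<noteq> {}" by blast
next
  fix x assume x: "x \<in> Iw"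
  then have xA: "x \<in> A" by (simp add: Iw_def)
  have "inv\<^bsub>add_grp A pl asym_zero\<^esub> x = (tneg (fst x), sneg (sadd n p (snd x) (B (tneg (fst x)) (fst x))))"
    using group.inv_equality[OF add_group] pl_inv_ex[OF xA] pl_inv_in[OF xA] xA by (simp add: add_grp_def)
  then show "inv\<^bsub>add_grp A pl asym_zero\<^esub> x \<in> Iw"
    using x pl_inv_in[OF xA] z0 W_neg by (auto simp: Iw_def tneg_eq)
next
  fix x y assume "x \<in> Iw" "y \<in> Iw"
  then show "x \<otimes>\<^bsub>add_grp A pl asym_zero\<^esub> y \<in> Iw"
    using pl_in z0 W_add by (auto simp: Iw_def add_grp_def asym_add_def tadd_eq)
qed

lemma Iw_lambda: assumes "a \<in> A" "x \<in> Iw" shows "brace_lambda A pl asym_zero tm a x \<in> Iw"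
proof -
  have xA: "x \<in> A" using assms(2) by (simp add: Iw_def)
  have "brace_lambda A pl asym_zero tm a x \<in> A"
    using lambda_eq[OF assms(1) xA] assms(1) xA
    by (simp add: A_mem alpha_in sadd_in sneg_in bT_in)
  then show ?thesis using lambda_eq[OF assms(1) xA] assms(2) z0 W_fpow
    by (auto simp: Iw_def alpha_eq)
qed

lemma Iw_conj: assumes g: "g \<in> A" and h: "h \<in> Iw" and h': "h' \<in> A" and e: "tm h' g = tm g h"
  shows "h' \<in> Iw"
proof -
  have hA: "h \<in> A" using h by (simp add: Iw_def)
  have tg: "fst g \<in> T" and th: "fst h \<in> T" and th': "fst h' \<in> T" using g hA h' by (auto simp: A_mem)
  have "fst h' z0 j \<in> W" if j: "j < m z0" for j
  proof -
    let ?a = "(f z0 ^^ expo (snd h') z0 j) (fst g z0 j)"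
    let ?c = "(f z0 ^^ expo (snd g) z0 j) (fst h z0 j)"
    have v: "fst g z0 j \<in> V z0" "fst h z0 j \<in> V z0" "fst h' z0 j \<in> V z0" using tg th th' z0 j T_in by auto
    have va: "?a \<in> V z0" "?c \<in> V z0" using v fpow_in z0 by auto
    have "tadd n p (fst h') (al (snd h') (fst g)) z0 j = tadd n p (fst g) (al (snd g) (fst h)) z0 j"
      using e by (simp add: asym_mul_def)
    then have "vadd (p z0) (fst h' z0 j) ?a = vadd (p z0) (fst g z0 j) ?c"
      using z0 j by (simp add: tadd_eq alpha_eq)
    then have "fst h' z0 j = vsub (p z0) (vadd (p z0) (fst g z0 j) ?c) ?a"
      using vadd_eq_iff[OF P0 v(3) va(1) vadd_in[OF P0 v(1) va(2)]] by blast
    also have "\<dots> = vadd (p z0) (vsub (p z0) (fst g z0 j) ?a) ?c"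
      by (intro ext) (simp add: vsub_def vadd_def mod_simps algebra_simps)
    finally show ?thesis
      using W_add[OF W_diff[OF v(1)] W_fpow] h j by (simp add: Iw_def)
  qed
  then show ?thesis using h' by (simp add: Iw_def)
qed

lemma Iw_mul_sub: "subgroup Iw (mul_grp A tm asym_zero)"
proof (rule group.subgroupI[OF mul_group])
  show "Iw \<subseteq> carrier (mul_grp A tm asym_zero)" by (auto simp: Iw_def mul_grp_def)
  have "asym_zero \<in> Iw" using zero_in W_zero by (simp add: Iw_def asym_zero_def)
  then show "Iw \<noteq> {}" by blast
next
  fix x assume x: "x \<in> Iw"
  then have xA: "x \<in> A" by (simp add: Iw_def)
  have "inv\<^bsub>mul_grp A tm asym_zero\<^esub> x = (tneg (al (sneg (snd x)) (fst x)), sneg (snd x))"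
    using group.inv_equality[OF mul_group] tm_inv_ex[OF xA] tm_inv_in[OF xA] xA by (simp add: mul_grp_def)
  then show "inv\<^bsub>mul_grp A tm asym_zero\<^esub> x \<in> Iw"
    using x tm_inv_in[OF xA] z0 W_neg W_fpow by (auto simp: Iw_def tneg_eq alpha_eq)
next
  fix x y assume "x \<in> Iw" "y \<in> Iw"
  then show "x \<otimes>\<^bsub>mul_grp A tm asym_zero\<^esub> y \<in> Iw"
    using tm_in z0 W_add W_fpow by (auto simp: Iw_def mul_grp_def asym_mul_def tadd_eq alpha_eq)
qed

lemma Iw_normal: "Iw \<lhd> mul_grp A tm asym_zero"
proof -
  interpret M: group "mul_grp A tm asym_zero" by (rule mul_group)
  show ?thesis unfolding M.normal_inv_iff
  proof (intro conjI Iw_mul_sub ballI)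
    fix g h assume g: "g \<in> carrier (mul_grp A tm asym_zero)" and h: "h \<in> Iw"
    have hc: "h \<in> carrier (mul_grp A tm asym_zero)" using h by (simp add: Iw_def mul_grp_def)
    let ?h' = "g \<otimes>\<^bsub>mul_grp A tm asym_zero\<^esub> h \<otimes>\<^bsub>mul_grp A tm asym_zero\<^esub> inv\<^bsub>mul_grp A tm asym_zero\<^esub> g"
    have h'c: "?h' \<in> carrier (mul_grp A tm asym_zero)" using g hc by simp
    have "?h' \<otimes>\<^bsub>mul_grp A tm asym_zero\<^esub> g = g \<otimes>\<^bsub>mul_grp A tm asym_zero\<^esub> h"
      using g hc by (simp add: M.m_assoc)
    then show "?h' \<in> Iw" using Iw_conj[of g h ?h'] g h h'c by (simp add: mul_grp_def)
  qed
qed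

lemma Iw_ideal: "is_ideal Iw"
  unfolding is_ideal_def brace_ideal_def brace_left_ideal_def
  using Iw_add_sub Iw_lambda Iw_normal mul_group by blast

end

end

context setting begin

lemma simple_imp_bij: assumes sim: "simple_left_brace A pl asym_zero tm" and z0: "z0 < n"
  shows "bij_betw (\<lambda>v. vsub (p z0) (f z0 v) v) (V z0) (V z0)"
proof (rule ccontr)
  assume nb: "\<not> ?thesis"
  let ?g = "\<lambda>v. vsub (p z0) (f z0 v) v"
  have "?g ` V z0 \<noteq> V z0"
  proof
    assume eq: "?g ` V z0 = V z0"
    then have "inj_on ?g (V z0)" using eq_card_imp_inj_on[OF finite_Zp] by metis
    then show False using nb eq by (simp add: bij_betw_def)
  qed
  then obtain v where v: "v \<in> V z0" "v \<notin> ?g ` V z0" using W_sub[OF z0] by blast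
  have I: "is_ideal (Iw z0)" using Iw_ideal[OF z0] .
  then have "Iw z0 = {asym_zero} \<or> Iw z0 = A" using sim by (simp add: simple_left_brace_def is_ideal_def)
  moreover have "Iw z0 \<noteq> {asym_zero}"
  proof -
    have n0: "0 < n" using n_gt by simp
    have "Se 0 0 1 \<in> S" using Se_in[OF n0] r_pos p_gt1 n0 by simp
    then have "(\<lambda>_ _ _. 0, Se 0 0 1) \<in> Iw z0" using zeroT W_zero[OF z0] z0 by (simp add: Iw_def A_mem)
    moreover have "(\<lambda>_ _ _. 0, Se 0 0 1) \<noteq> asym_zero" by (auto simp: asym_zero_def Se_def fun_eq_iff)
    ultimately show ?thesis by blast
  qed
  moreover have "Iw z0 \<noteq> A"
  proof -
    have m0: "0 < m z0" using m_ge r_pos z0 by (metis less_le_trans)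
    have "(Tv z0 0 v, (\<lambda>_ _. 0)) \<in> A" using Tv_in[OF z0 m0 v(1)] zeroS by (simp add: A_mem)
    moreover have "(Tv z0 0 v, (\<lambda>_ _. 0)) \<notin> Iw z0"
    proof
      assume "(Tv z0 0 v, (\<lambda>_ _. 0)) \<in> Iw z0"
      then have "Tv z0 0 v z0 0 \<in> W z0" using m0 z0 by (simp add: Iw_def)
      then show False using v by (simp add: Tv_def)
    qed
    ultimately show ?thesis by blast
  qed
  ultimately show False by blast
qed

end

theorem theorem3p3:
  fixes n :: nat
    and p r m d :: "nat \<Rightarrow> nat"
    and b :: "nat \<Rightarrow> (nat \<Rightarrow> int) \<Rightarrow> (nat \<Rightarrow> int) \<Rightarrow> int"
    and f :: "nat \<Rightarrow> (nat \<Rightarrow> int) \<Rightarrow> (nat \<Rightarrow> int)"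
  assumes n_gt: "n > 1"
    and p_prime: "\<forall>z<n. prime (p z)"
    and p_distinct: "inj_on p {..<n}"
    and r_pos: "\<forall>z<n. 0 < r z"
    and m_ge: "\<forall>z<n. r z \<le> m z \<and> r (cpred n z) \<le> m z"
    and b_form: "\<forall>z<n. nonsing_sym_bilinear (p z) (Zp_space (p z) (d z)) (b z)"
    and f_orth: "\<forall>z<n. in_orth (p z) (Zp_space (p z) (d z)) (b z) (f z)"
    and f_order: "\<forall>z<n. perm_order (Zp_space (p z) (d z)) (f z) (p (cpred n z))"
  shows "simple_left_brace (asym_carrier n p d m r) (asym_add n p r m b) asym_zero (asym_mul n p r m f)
     \<longleftrightarrow> (\<forall>z<n. bij_betw (\<lambda>v. vsub (p z) (f z v) v) (Zp_space (p z) (d z)) (Zp_space (p z) (d z)))"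
proof -
  interpret setting n p r m d b f
    using assms by (unfold_locales) auto
  show ?thesis
  proof
    assume "simple_left_brace (asym_carrier n p d m r) (asym_add n p r m b) asym_zero (asym_mul n p r m f)"
    then show "\<forall>z<n. bij_betw (\<lambda>v. vsub (p z) (f z v) v) (Zp_space (p z) (d z)) (Zp_space (p z) (d z))"
      using simple_imp_bij by blast
  next
    assume bj: "\<forall>z<n. bij_betw (\<lambda>v. vsub (p z) (f z v) v) (Zp_space (p z) (d z)) (Zp_space (p z) (d z))"
    interpret setting_bij n p r m d b f
      using bj by (unfold_locales) auto
    show "simple_left_brace (asym_carrier n p d m r) (asym_add n p r m b) asym_zero (asym_mul n p r m f)"
      by (rule simple)
  qed
qed


end
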